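(* Let $q\ge 2$ and $\mathbf{u}=(u_2,\dots,u_q)$ be formal variables. Let $G_{n_1,n_2}(\mathbf{u})$ be the generating polynomial of $\mathcal{G}_{n_1,n_2}$ in which $u_j$ marks components of size $j$, i.e. $G_{n_1,n_2}(\mathbf{u})=\sum_{G\in\mathcal{G}_{n_1,n_2}}\prod_{j=2}^q u_j^{c_j(G)}$ where $c_j(G)$ is the number of connected components of $G$ with exactly $j$ vertices. Then $G_{n_1,n_2}(\mathbf{u})=0$ when $n_1$ is odd, and when $n_1$ is even, \[ G_{n_1,n_2}(\mathbf{u})=v_{n_1,n_2}\,[z^{n_2}]\,e^{\operatorname{Cycle}(z,\mathbf{u})}\operatorname{Path}(z,\mathbf{u})^{n_1/2}, \] where \[ v_{n_1,n_2}=\frac{(n_1+n_2)!}{2^{n_1/2}(n_1/2)!},\qquad \operatorname{Path}(z,\mathbf{u})=\frac{1}{1-z}+\sum_{j=2}^q(u_j-1)z^{j-2}, \] \[ \operatorname{Cycle}(z,\mathbf{u})=\frac12\log\frac{1}{1-z}-\frac z2-\frac{z^2}{4}+\sum_{j=3}^q(u_j-1)\frac{z^j}{2j}, \] and $[z^{n_2}]$ denotes extraction of the coefficient of $z^{n_2}$ in the formal power series in $z$.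
   Context: $\mathcal{G}_{n_1,n_2}$ denotes the set of labelled simple graphs (vertex set $\{1,\dots,n_1+n_2\}$) in which every vertex has degree $1$ or $2$, with exactly $n_1$ vertices of degree $1$ and $n_2$ vertices of degree $2$. *)

theory Defs
  imports "HOL-Computational_Algebra.Formal_Power_Series"
begin

definition simple_graph :: "nat \<Rightarrow> nat set set \<Rightarrow> bool" where
  "simple_graph n E \<longleftrightarrow> (\<forall>e\<in>E. e \<subseteq> {1..n} \<and> card e = 2)"

definition degree :: "nat set set \<Rightarrow> nat \<Rightarrow> nat" where
  "degree E v = card {e\<in>E. v \<in> e}"

definition graphs12 :: "nat \<Rightarrow> nat \<Rightarrow> nat set set set" where
  "graphs12 n1 n2 = {E. simple_graph (n1 + n2) E
      \<and> (\<forall>v\<in>{1..n1+n2}. degree E v = 1 \<or> degree E v = 2)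
      \<and> card {v\<in>{1..n1+n2}. degree E v = 1} = n1}"

definition adjacent :: "nat set set \<Rightarrow> nat \<Rightarrow> nat \<Rightarrow> bool" where
  "adjacent E v w \<longleftrightarrow> {v, w} \<in> E"

definition component :: "nat \<Rightarrow> nat set set \<Rightarrow> nat \<Rightarrow> nat set" where
  "component n E v = {w\<in>{1..n}. (adjacent E)\<^sup>*\<^sup>* v w}"

definition components :: "nat \<Rightarrow> nat set set \<Rightarrow> nat set set" where
  "components n E = component n E ` {1..n}"

definition comp_count :: "nat \<Rightarrow> nat set set \<Rightarrow> nat \<Rightarrow> nat" where
  "comp_count n E j = card {C\<in>components n E. card C = j}"

definition genpoly :: "nat \<Rightarrow> (nat \<Rightarrow> 'a::comm_ring_1) \<Rightarrow> nat \<Rightarrow> nat \<Rightarrow> 'a" where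
  "genpoly q u n1 n2 =
     (\<Sum>E\<in>graphs12 n1 n2. \<Prod>j\<in>{2..q}. u j ^ comp_count (n1 + n2) E j)"

definition Path_fps :: "nat \<Rightarrow> (nat \<Rightarrow> 'a::field_char_0) \<Rightarrow> 'a fps" where
  "Path_fps q u = inverse (1 - fps_X)
      + (\<Sum>j\<in>{2..q}. fps_const (u j - 1) * fps_X ^ (j - 2))"

text \<open>log(1/(1-z)) = - log(1 - z), with log(1+x) = fps_ln 1.\<close>

definition log_inv_one_minus :: "'a::field_char_0 fps" where
  "log_inv_one_minus = - (fps_ln 1 oo (- fps_X))"

definition Cycle_fps :: "nat \<Rightarrow> (nat \<Rightarrow> 'a::field_char_0) \<Rightarrow> 'a fps" where
  "Cycle_fps q u = fps_const (1/2) * log_inv_one_minus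
      - fps_const (1/2) * fps_X - fps_const (1/4) * fps_X ^ 2
      + (\<Sum>j\<in>{3..q}. fps_const ((u j - 1) / (2 * of_nat j)) * fps_X ^ j)"

end

theory Submission
  imports Defs
begin


definition gr :: "nat set \<Rightarrow> nat set \<Rightarrow> nat set set set" where
 "gr V D = {E. (\<forall>e\<in>E. e \<subseteq> V \<and> card e = 2) \<and> (\<forall>v\<in>D. degree E v = 1) \<and> (\<forall>v\<in>V-D. degree E v = 2)}"

definition comps :: "nat set \<Rightarrow> nat set set \<Rightarrow> nat set set" where
 "comps V E = (\<lambda>v. {w\<in>V. (adjacent E)\<^sup>*\<^sup>* v w}) ` V"

definition wt :: "(nat set \<Rightarrow> 'a::comm_monoid_mult) \<Rightarrow> nat set \<Rightarrow> nat set set \<Rightarrow> 'a" where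
 "wt f V E = (\<Prod>C\<in>comps V E. f C)"

lemma gr_sub: "gr V D \<subseteq> Pow (Pow V)" unfolding gr_def by auto

lemma finite_gr: "finite V \<Longrightarrow> finite (gr V D)"
  by (meson finite_Pow_iff finite_subset gr_sub)

lemma gr_finite_E: "finite V \<Longrightarrow> E \<in> gr V D \<Longrightarrow> finite E"
  using gr_sub[of V D] finite_subset[of E "Pow V"] by auto

lemma comps_sub: "C \<in> comps V E \<Longrightarrow> C \<subseteq> V" unfolding comps_def by auto

lemma finite_comps: "finite V \<Longrightarrow> finite (comps V E)" unfolding comps_def by simp

lemma adj_sym: "adjacent E a b = adjacent E b a"
  unfolding adjacent_def by (simp add: insert_commute)

lemma rtr_sym: "(adjacent E)\<^sup>*\<^sup>* a b \<Longrightarrow> (adjacent E)\<^sup>*\<^sup>* b a"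
proof (induction rule: rtranclp_induct)
  case base then show ?case by simp
next
  case (step y z)
  then show ?case by (metis adj_sym converse_rtranclp_into_rtranclp)
qed

lemma rtr_isolated:
  assumes "x \<notin> \<Union>E" "(adjacent E)\<^sup>*\<^sup>* x b" shows "b = x"
  using assms(2)
proof (induction rule: rtranclp_induct)
  case base then show ?case by simp
next
  case (step y z)
  then show ?case using assms(1) unfolding adjacent_def by auto
qed

lemma rtr_leaf:
  assumes r: "r \<notin> \<Union>E'" and xr: "x \<noteq> r"
  and "(adjacent (insert {r,x} E'))\<^sup>*\<^sup>* a b" and "a \<noteq> r"
  shows "(adjacent E')\<^sup>*\<^sup>* a b \<or> (b = r \<and> (adjacent E')\<^sup>*\<^sup>* a x)"
  using assms(3)
proof (induction rule: rtranclp_induct)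
  case base then show ?case by simp
next
  case (step y z)
  have iso: "\<And>c. (adjacent E')\<^sup>*\<^sup>* a r \<Longrightarrow> False"
    using rtr_isolated[OF r] rtr_sym assms(4) by blast
  from step(2) have "{y,z} = {r,x} \<or> {y,z} \<in> E'" unfolding adjacent_def by auto
  then show ?case
  proof
    assume e: "{y,z} = {r,x}"
    then have "(y = r \<and> z = x) \<or> (y = x \<and> z = r)" by (metis doubleton_eq_iff)
    then show ?thesis using step(3) iso by auto
  next
    assume e: "{y,z} \<in> E'"
    then have "y \<noteq> r" "z \<noteq> r" using r by auto
    then show ?thesis using step(3) e
      by (metis adjacent_def rtranclp.rtrancl_into_rtrancl)
  qed
qed

lemma adj_mono: "(adjacent E')\<^sup>*\<^sup>* a b \<Longrightarrow> (adjacent (insert e E'))\<^sup>*\<^sup>* a b"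
proof -
  have "adjacent E' \<le> adjacent (insert e E')" unfolding adjacent_def by auto
  then show "(adjacent E')\<^sup>*\<^sup>* a b \<Longrightarrow> (adjacent (insert e E'))\<^sup>*\<^sup>* a b"
    using rtranclp_mono by blast
qed

lemma rtr_leaf_iff:
  assumes r: "r \<notin> \<Union>E'" and xr: "x \<noteq> r" and ar: "a \<noteq> r"
  shows "(adjacent (insert {r,x} E'))\<^sup>*\<^sup>* a b \<longleftrightarrow> (if b = r then (adjacent E')\<^sup>*\<^sup>* a x else (adjacent E')\<^sup>*\<^sup>* a b)"
proof -
  have iso: "(adjacent E')\<^sup>*\<^sup>* a r \<Longrightarrow> False"
    using rtr_isolated[OF r] rtr_sym ar by blast
  have e: "adjacent (insert {r,x} E') x r" unfolding adjacent_def by (simp add: insert_commute)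
  show ?thesis
    using rtr_leaf[OF r xr _ ar, of b] iso adj_mono[of E' a x "{r,x}"] adj_mono[of E' a b "{r,x}"] e
    by (auto intro: rtranclp.rtrancl_into_rtrancl)
qed

lemma rtr_leaf_iff_r:
  assumes r: "r \<notin> \<Union>E'" and xr: "x \<noteq> r"
  shows "(adjacent (insert {r,x} E'))\<^sup>*\<^sup>* r b \<longleftrightarrow> (b = r \<or> (adjacent E')\<^sup>*\<^sup>* x b)"
proof -
  have e: "adjacent (insert {r,x} E') r x" unfolding adjacent_def by simp
  have "(adjacent (insert {r,x} E'))\<^sup>*\<^sup>* r b \<longleftrightarrow> (adjacent (insert {r,x} E'))\<^sup>*\<^sup>* b r"
    using rtr_sym by blast
  also have "\<dots> \<longleftrightarrow> (b = r \<or> (adjacent E')\<^sup>*\<^sup>* b x)"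
    using rtr_leaf_iff[OF r xr, of b r] by auto
  also have "\<dots> \<longleftrightarrow> (b = r \<or> (adjacent E')\<^sup>*\<^sup>* x b)" using rtr_sym by blast
  finally show ?thesis .
qed

definition gins :: "nat \<Rightarrow> nat \<Rightarrow> nat set \<Rightarrow> nat set" where
  "gins r x C = (if x \<in> C then insert r C else C)"

lemma comps_leaf:
  assumes r: "r \<notin> \<Union>E'" and xr: "x \<noteq> r" and V: "r \<in> V" "x \<in> V"
  shows "comps V (insert {r,x} E') = gins r x ` comps (V-{r}) E'"
proof -
  let ?R = "adjacent (insert {r,x} E')" and ?R' = "adjacent E'"
  have c1: "{w\<in>V. ?R\<^sup>*\<^sup>* v w} = gins r x {w\<in>V-{r}. ?R'\<^sup>*\<^sup>* v w}" if "v \<in> V" "v \<noteq> r" for v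
  proof (cases "?R'\<^sup>*\<^sup>* v x")
    case True
    have "x \<in> {w\<in>V-{r}. ?R'\<^sup>*\<^sup>* v w}" using True V xr by auto
    then have g: "gins r x {w\<in>V-{r}. ?R'\<^sup>*\<^sup>* v w} = insert r {w\<in>V-{r}. ?R'\<^sup>*\<^sup>* v w}"
      unfolding gins_def by simp
    show ?thesis unfolding g
    proof (rule set_eqI)
      fix w show "w \<in> {w\<in>V. ?R\<^sup>*\<^sup>* v w} \<longleftrightarrow> w \<in> insert r {w\<in>V-{r}. ?R'\<^sup>*\<^sup>* v w}"
        using rtr_leaf_iff[OF r xr that(2), of w] True V by (cases "w = r") auto
    qed
  next
    case False
    have "x \<notin> {w\<in>V-{r}. ?R'\<^sup>*\<^sup>* v w}" using False by auto
    then have g: "gins r x {w\<in>V-{r}. ?R'\<^sup>*\<^sup>* v w} = {w\<in>V-{r}. ?R'\<^sup>*\<^sup>* v w}"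
      unfolding gins_def by (rule if_not_P)
    show ?thesis unfolding g
    proof (rule set_eqI)
      fix w show "w \<in> {w\<in>V. ?R\<^sup>*\<^sup>* v w} \<longleftrightarrow> w \<in> {w\<in>V-{r}. ?R'\<^sup>*\<^sup>* v w}"
        using rtr_leaf_iff[OF r xr that(2), of w] False V by (cases "w = r") auto
    qed
  qed
  have c2: "{w\<in>V. ?R\<^sup>*\<^sup>* r w} = gins r x {w\<in>V-{r}. ?R'\<^sup>*\<^sup>* x w}"
  proof -
    have "x \<in> {w\<in>V-{r}. ?R'\<^sup>*\<^sup>* x w}" using V xr by auto
    then have g: "gins r x {w\<in>V-{r}. ?R'\<^sup>*\<^sup>* x w} = insert r {w\<in>V-{r}. ?R'\<^sup>*\<^sup>* x w}"
      unfolding gins_def by simp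
    show ?thesis unfolding g
    proof (rule set_eqI)
      fix w show "w \<in> {w\<in>V. ?R\<^sup>*\<^sup>* r w} \<longleftrightarrow> w \<in> insert r {w\<in>V-{r}. ?R'\<^sup>*\<^sup>* x w}"
        using rtr_leaf_iff_r[OF r xr, of w] V by (cases "w = r") auto
    qed
  qed
  define CE where "CE = (\<lambda>v. {w\<in>V. ?R\<^sup>*\<^sup>* v w})"
  define C' where "C' = (\<lambda>v. {w\<in>V-{r}. ?R'\<^sup>*\<^sup>* v w})"
  have VV: "V = insert r (V-{r})" using V by auto
  have "comps V (insert {r, x} E') = CE ` insert r (V-{r})"
    unfolding comps_def CE_def using VV by simp
  also have "\<dots> = insert (CE r) (CE ` (V-{r}))" by (simp only: image_insert)
  also have "CE ` (V-{r}) = gins r x ` comps (V-{r}) E'"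
    unfolding comps_def image_image CE_def by (rule image_cong) (use c1 in auto)
  also have "CE r \<in> gins r x ` comps (V-{r}) E'"
    unfolding CE_def c2 comps_def using V xr by auto
  then have "insert (CE r) (gins r x ` comps (V-{r}) E') = gins r x ` comps (V-{r}) E'"
    by (rule insert_absorb)
  finally show ?thesis .
qed

lemma inj_gins: "r \<notin> V \<Longrightarrow> inj_on (gins r x) (Pow V)"
  unfolding inj_on_def gins_def by (auto split: if_splits)

lemma wt_leaf:
  assumes r: "r \<notin> \<Union>E'" and xr: "x \<noteq> r" and V: "r \<in> V" "x \<in> V" "finite V"
  shows "wt f V (insert {r,x} E') = wt (f \<circ> gins r x) (V-{r}) E'"
proof -
  have "inj_on (gins r x) (comps (V-{r}) E')"
    using inj_gins[of r "V-{r}" x] comps_sub by (meson Diff_iff PowI inj_on_subset insertI1 subsetI)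
  then show ?thesis unfolding wt_def comps_leaf[OF assms(1-4)]
    by (simp add: prod.reindex)
qed

lemma comps_isolated:
  assumes x: "x \<notin> \<Union>E" "x \<in> V"
  shows "comps V E = insert {x} (comps (V-{x}) E)" "{x} \<notin> comps (V-{x}) E"
proof -
  have a: "(adjacent E)\<^sup>*\<^sup>* v x \<longleftrightarrow> v = x" for v
    using rtr_isolated[OF x(1)] rtr_sym by blast
  have b: "{w\<in>V. (adjacent E)\<^sup>*\<^sup>* x w} = {x}"
    using rtr_isolated[OF x(1)] x(2) by auto
  have c: "{w\<in>V. (adjacent E)\<^sup>*\<^sup>* v w} = {w\<in>V-{x}. (adjacent E)\<^sup>*\<^sup>* v w}" if "v \<noteq> x" for v
    using a[of v] that by auto
  show "comps V E = insert {x} (comps (V-{x}) E)"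
  proof -
    have "V = insert x (V-{x})" using x(2) by auto
    then have "comps V E = (\<lambda>v. {w\<in>V. (adjacent E)\<^sup>*\<^sup>* v w}) ` insert x (V-{x})"
      unfolding comps_def by simp
    also have "\<dots> = insert {x} ((\<lambda>v. {w\<in>V. (adjacent E)\<^sup>*\<^sup>* v w}) ` (V-{x}))"
      using b by (simp only: image_insert)
    also have "(\<lambda>v. {w\<in>V. (adjacent E)\<^sup>*\<^sup>* v w}) ` (V-{x}) = comps (V-{x}) E"
      unfolding comps_def by (rule image_cong) (use c in auto)
    finally show ?thesis .
  qed
  show "{x} \<notin> comps (V-{x}) E" using comps_sub by blast
qed

lemma wt_isolated:
  assumes x: "x \<notin> \<Union>E" "x \<in> V" "finite V"
  shows "wt f V E = f {x} * wt f (V-{x}) E"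
  unfolding wt_def comps_isolated(1)[OF x(1,2)]
  using comps_isolated(2)[OF x(1,2)] finite_comps[of "V-{x}" E] x(3) by simp

lemma degree_insert:
  assumes "finite E" "e \<notin> E"
  shows "degree (insert e E) v = degree E v + (if v \<in> e then 1 else 0)"
proof (cases "v \<in> e")
  case True
  then have "{e'\<in>insert e E. v \<in> e'} = insert e {e'\<in>E. v \<in> e'}" by auto
  then show ?thesis unfolding degree_def using assms True by simp
next
  case False
  then have "{e'\<in>insert e E. v \<in> e'} = {e'\<in>E. v \<in> e'}" by auto
  then show ?thesis unfolding degree_def using False by simp
qed

lemma only_edge:
  assumes "finite E" "degree E v = 1" "e \<in> E" "v \<in> e" "e' \<in> E" "v \<in> e'"
  shows "e' = e"
proof -
  have "card {e\<in>E. v \<in> e} = 1" using assms(2) unfolding degree_def .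
  then obtain a where a: "{e\<in>E. v \<in> e} = {a}" by (rule card_1_singletonE)
  have "e \<in> {e\<in>E. v \<in> e}" "e' \<in> {e\<in>E. v \<in> e}" using assms(3-6) by simp_all
  then show ?thesis unfolding a by simp
qed

lemma degree_zero: assumes "\<forall>e\<in>E. v \<notin> e" shows "degree E v = 0"
proof -
  have "{e\<in>E. v \<in> e} = {}" using assms by auto
  then show ?thesis unfolding degree_def by (simp only: card.empty)
qed

lemma leaf_edge:
  assumes "finite V" "E \<in> gr V D" "r \<in> D"
  shows "\<exists>x. x \<in> V \<and> x \<noteq> r \<and> {r,x} \<in> E"
proof -
  have fE: "finite E" using gr_finite_E assms by blast
  have "degree E r = 1" using assms unfolding gr_def by auto
  then have "card {e\<in>E. r \<in> e} = 1" unfolding degree_def .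
  then obtain e where e: "{e\<in>E. r \<in> e} = {e}" by (rule card_1_singletonE)
  then have eE: "e \<in> E" "r \<in> e" by auto
  then have "e \<subseteq> V" "card e = 2" using assms(2) unfolding gr_def by auto
  then obtain a b where ab: "e = {a,b}" "a \<noteq> b" by (meson card_2_iff)
  show ?thesis
  proof (cases "a = r")
    case True then show ?thesis using ab eE \<open>e \<subseteq> V\<close> by auto
  next
    case False then have "b = r" using ab eE by auto
    then show ?thesis using ab eE \<open>e \<subseteq> V\<close> False by (auto simp: insert_commute)
  qed
qed

lemma bij_a:
  assumes V: "finite V" "D \<subseteq> V" and r: "r \<in> D" and x: "x \<in> D" "x \<noteq> r"
  shows "{E\<in>gr V D. {r,x}\<in>E} = insert {r,x} ` gr (V-{r,x}) (D-{r,x})"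
proof
  show "{E\<in>gr V D. {r,x}\<in>E} \<subseteq> insert {r,x} ` gr (V-{r,x}) (D-{r,x})"
  proof
    fix E assume E: "E \<in> {E\<in>gr V D. {r,x}\<in>E}"
    then have EG: "E \<in> gr V D" and ex: "{r,x} \<in> E" by auto
    have fE: "finite E" using gr_finite_E EG V by blast
    have dr: "degree E r = 1" "degree E x = 1" using EG r x unfolding gr_def by auto
    define E' where "E' = E - {{r,x}}"
    have EE: "E = insert {r,x} E'" "{r,x} \<notin> E'" "finite E'" using ex fE unfolding E'_def by auto
    have nr: "\<forall>e\<in>E'. r \<notin> e \<and> x \<notin> e"
      using only_edge[OF fE dr(1) ex] only_edge[OF fE dr(2) ex] unfolding E'_def by auto
    have deg: "degree E v = degree E' v + (if v \<in> {r,x} then 1 else 0)" for v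
      using degree_insert[OF EE(3,2)] EE(1) by simp
    have "E' \<in> gr (V-{r,x}) (D-{r,x})"
      unfolding gr_def
    proof (intro CollectI conjI ballI)
      fix e assume "e \<in> E'" then show "e \<subseteq> V - {r,x}" "card e = 2"
        using EG nr unfolding gr_def E'_def by auto
    next
      fix v assume v: "v \<in> D - {r,x}"
      then show "degree E' v = 1" using deg[of v] EG unfolding gr_def by auto
    next
      fix v assume v: "v \<in> V - {r,x} - (D - {r,x})"
      then show "degree E' v = 2" using deg[of v] EG unfolding gr_def by auto
    qed
    then show "E \<in> insert {r,x} ` gr (V-{r,x}) (D-{r,x})" using EE(1) by blast
  qed
next
  show "insert {r,x} ` gr (V-{r,x}) (D-{r,x}) \<subseteq> {E\<in>gr V D. {r,x}\<in>E}"
  proof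
    fix E assume "E \<in> insert {r,x} ` gr (V-{r,x}) (D-{r,x})"
    then obtain E' where E': "E' \<in> gr (V-{r,x}) (D-{r,x})" and EE: "E = insert {r,x} E'" by blast
    have fE: "finite E'" using gr_finite_E E' V by blast
    have nr: "\<forall>e\<in>E'. r \<notin> e \<and> x \<notin> e" using E' unfolding gr_def by auto
    then have nin: "{r,x} \<notin> E'" by auto
    have deg: "degree E v = degree E' v + (if v \<in> {r,x} then 1 else 0)" for v
      using degree_insert[OF fE nin] EE by simp
    have d0: "degree E' r = 0" "degree E' x = 0" using nr degree_zero by auto
    have "E \<in> gr V D"
      unfolding gr_def
    proof (intro CollectI conjI ballI)
      fix e assume "e \<in> E" then show "e \<subseteq> V" "card e = 2"
        using E' EE V r x unfolding gr_def by auto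
    next
      fix v assume v: "v \<in> D"
      show "degree E v = 1"
      proof (cases "v \<in> {r,x}")
        case True then show ?thesis using deg d0 by auto
      next
        case False then show ?thesis using deg[of v] E' v unfolding gr_def by auto
      qed
    next
      fix v assume v: "v \<in> V - D"
      then have "v \<notin> {r,x}" using r x by auto
      then show "degree E v = 2" using deg[of v] E' v unfolding gr_def by auto
    qed
    then show "E \<in> {E\<in>gr V D. {r,x}\<in>E}" using EE by auto
  qed
qed

lemma bij_b:
  assumes V: "finite V" "D \<subseteq> V" and r: "r \<in> D" and x: "x \<in> V - D"
  shows "{E\<in>gr V D. {r,x}\<in>E} = insert {r,x} ` gr (V-{r}) (insert x (D-{r}))"
proof
  show "{E\<in>gr V D. {r,x}\<in>E} \<subseteq> insert {r,x} ` gr (V-{r}) (insert x (D-{r}))"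
  proof
    fix E assume E: "E \<in> {E\<in>gr V D. {r,x}\<in>E}"
    then have EG: "E \<in> gr V D" and ex: "{r,x} \<in> E" by auto
    have fE: "finite E" using gr_finite_E EG V by blast
    have dr: "degree E r = 1" "degree E x = 2" using EG r x unfolding gr_def by auto
    define E' where "E' = E - {{r,x}}"
    have EE: "E = insert {r,x} E'" "{r,x} \<notin> E'" "finite E'" using ex fE unfolding E'_def by auto
    have nr: "\<forall>e\<in>E'. r \<notin> e"
      using only_edge[OF fE dr(1) ex] unfolding E'_def by auto
    have deg: "degree E v = degree E' v + (if v \<in> {r,x} then 1 else 0)" for v
      using degree_insert[OF EE(3,2)] EE(1) by simp
    have "E' \<in> gr (V-{r}) (insert x (D-{r}))"
      unfolding gr_def
    proof (intro CollectI conjI ballI)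
      fix e assume "e \<in> E'" then show "e \<subseteq> V - {r}" "card e = 2"
        using EG nr unfolding gr_def E'_def by auto
    next
      fix v assume v: "v \<in> insert x (D - {r})"
      show "degree E' v = 1"
      proof (cases "v = x")
        case True then show ?thesis using deg[of x] dr by auto
      next
        case False then show ?thesis using deg[of v] EG v unfolding gr_def by auto
      qed
    next
      fix v assume v: "v \<in> V - {r} - insert x (D - {r})"
      then show "degree E' v = 2" using deg[of v] EG v unfolding gr_def by auto
    qed
    then show "E \<in> insert {r,x} ` gr (V-{r}) (insert x (D-{r}))" using EE(1) by blast
  qed
next
  show "insert {r,x} ` gr (V-{r}) (insert x (D-{r})) \<subseteq> {E\<in>gr V D. {r,x}\<in>E}"
  proof
    have xr: "x \<noteq> r" using r x by auto
    fix E assume "E \<in> insert {r,x} ` gr (V-{r}) (insert x (D-{r}))"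
    then obtain E' where E': "E' \<in> gr (V-{r}) (insert x (D-{r}))" and EE: "E = insert {r,x} E'" by blast
    have fE: "finite E'" using gr_finite_E E' V by blast
    have nr: "\<forall>e\<in>E'. r \<notin> e" using E' unfolding gr_def by auto
    then have nin: "{r,x} \<notin> E'" by auto
    have deg: "degree E v = degree E' v + (if v \<in> {r,x} then 1 else 0)" for v
      using degree_insert[OF fE nin] EE by simp
    have d0: "degree E' r = 0" using nr degree_zero by auto
    have d1: "degree E' x = 1" using E' unfolding gr_def by auto
    have "E \<in> gr V D"
      unfolding gr_def
    proof (intro CollectI conjI ballI)
      fix e assume "e \<in> E" then show "e \<subseteq> V" "card e = 2"
        using E' EE V r x xr unfolding gr_def by auto
    next
      fix v assume v: "v \<in> D"
      show "degree E v = 1"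
      proof (cases "v = r")
        case True then show ?thesis using deg d0 by auto
      next
        case False then have "v \<noteq> x" using x v by auto
        then show ?thesis using False deg[of v] E' v unfolding gr_def by auto
      qed
    next
      fix v assume v: "v \<in> V - D"
      show "degree E v = 2"
      proof (cases "v = x")
        case True then show ?thesis using deg[of x] d1 by auto
      next
        case False then show ?thesis using deg[of v] E' v r unfolding gr_def by auto
      qed
    qed
    then show "E \<in> {E\<in>gr V D. {r,x}\<in>E}" using EE by auto
  qed
qed

lemma inj_ins_gr: assumes "r \<notin> V'" shows "inj_on (insert {r,x}) (gr V' D')"
proof (rule inj_onI)
  fix A B assume A: "A \<in> gr V' D'" and B: "B \<in> gr V' D'" and eq: "insert {r,x} A = insert {r,x} B"
  have "{r,x} \<notin> A" "{r,x} \<notin> B" using A B assms unfolding gr_def by auto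
  then show "A = B" using eq by (metis Diff_insert_absorb)
qed

lemma wt_cong: "(\<And>C. C \<subseteq> V \<Longrightarrow> f C = g C) \<Longrightarrow> wt f V E = wt g V E"
  unfolding wt_def by (rule prod.cong) (auto dest: comps_sub)

lemma edges_in: "E' \<in> gr V' D' \<Longrightarrow> r \<notin> V' \<Longrightarrow> r \<notin> \<Union>E'"
  unfolding gr_def by auto

lemma decomp:
  assumes V: "finite V" "D \<subseteq> V" and r: "r \<in> D"
  shows "(\<Sum>E\<in>{E\<in>gr V D. P E}. w E) = (\<Sum>x\<in>V-{r}. \<Sum>E\<in>{E\<in>gr V D. {r,x}\<in>E \<and> P E}. w E)"
proof -
  let ?B = "{E\<in>gr V D. P E}"
  have fB: "finite ?B" using finite_gr[OF V(1)] by simp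
  have "(\<Sum>x\<in>V-{r}. \<Sum>E\<in>{E\<in>gr V D. {r,x}\<in>E \<and> P E}. w E) = (\<Sum>x\<in>V-{r}. \<Sum>E\<in>{E\<in>?B. {r,x}\<in>E}. w E)"
    by (rule sum.cong[OF refl], rule arg_cong[where f="sum w"]) auto
  also have "\<dots> = (\<Sum>E\<in>?B. \<Sum>x | x\<in>V-{r} \<and> {r,x}\<in>E. w E)"
    by (rule sum.swap_restrict) (use V fB in auto)
  also have "\<dots> = (\<Sum>E\<in>?B. w E)"
  proof (rule sum.cong[OF refl])
    fix E assume E: "E \<in> ?B"
    then have EG: "E \<in> gr V D" by simp
    obtain x where x: "x \<in> V" "x \<noteq> r" "{r,x} \<in> E" using leaf_edge[OF V(1) EG r] by blast
    have fE: "finite E" using gr_finite_E[OF V(1) EG] .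
    have d: "degree E r = 1" using EG r unfolding gr_def by auto
    have "{x. x\<in>V-{r} \<and> {r,x}\<in>E} = {x}"
    proof (rule set_eqI, rule iffI)
      fix y assume "y \<in> {x. x\<in>V-{r} \<and> {r,x}\<in>E}"
      then have "{r,y} \<in> E" "y \<noteq> r" by auto
      then have "{r,y} = {r,x}" using only_edge[OF fE d x(3) _ _ ] by simp
      then show "y \<in> {x}" using \<open>y \<noteq> r\<close> by (auto simp: doubleton_eq_iff)
    next
      fix y assume "y \<in> {x}" then show "y \<in> {x. x\<in>V-{r} \<and> {r,x}\<in>E}" using x by auto
    qed
    then show "(\<Sum>x | x\<in>V-{r} \<and> {r,x}\<in>E. w E) = w E" by simp
  qed
  finally show ?thesis by (rule sym)
qed

lemma filter_image: "{y \<in> f ` A. P y} = f ` {x\<in>A. P (f x)}" by auto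

lemma piece_a:
  assumes V: "finite V" "D \<subseteq> V" and r: "r \<in> D" and x: "x \<in> D" "x \<noteq> r"
  shows "(\<Sum>E\<in>{E\<in>gr V D. {r,x}\<in>E \<and> P E}. wt f V E)
       = (\<Sum>E'\<in>{E'\<in>gr (V-{r,x}) (D-{r,x}). P (insert {r,x} E')}. f {r,x} * wt f (V-{r,x}) E')"
proof -
  have "{E\<in>gr V D. {r,x}\<in>E \<and> P E} = {E\<in>{E\<in>gr V D. {r,x}\<in>E}. P E}" by blast
  also have "\<dots> = insert {r,x} ` {E'\<in>gr (V-{r,x}) (D-{r,x}). P (insert {r,x} E')}"
    unfolding bij_a[OF V r x] by (rule filter_image)
  finally have eq: "{E\<in>gr V D. {r,x}\<in>E \<and> P E} = insert {r,x} ` {E'\<in>gr (V-{r,x}) (D-{r,x}). P (insert {r,x} E')}" .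
  moreover have "inj_on (insert {r,x}) {E'\<in>gr (V-{r,x}) (D-{r,x}). P (insert {r,x} E')}"
    by (rule inj_on_subset[OF inj_ins_gr[of r "V-{r,x}" x "D-{r,x}"]]) blast+
  moreover have "wt f V (insert {r,x} E') = f {r,x} * wt f (V-{r,x}) E'"
    if E': "E' \<in> gr (V-{r,x}) (D-{r,x})" for E'
  proof -
    have rn: "r \<notin> \<Union>E'" "x \<notin> \<Union>E'" using edges_in[OF E'] by auto
    have "wt f V (insert {r,x} E') = wt (f \<circ> gins r x) (V-{r}) E'"
      using wt_leaf[OF rn(1) x(2)] V r x by auto
    also have "\<dots> = (f \<circ> gins r x) {x} * wt (f \<circ> gins r x) (V-{r}-{x}) E'"
      by (rule wt_isolated) (use rn V x in auto)
    also have "wt (f \<circ> gins r x) (V-{r}-{x}) E' = wt f (V-{r}-{x}) E'"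
      by (rule wt_cong) (auto simp: gins_def)
    moreover have "(f \<circ> gins r x) {x} = f {r,x}" by (simp add: gins_def)
    moreover have "V-{r}-{x} = V-{r,x}" by blast
    ultimately show ?thesis by simp
  qed
  ultimately show ?thesis by (simp add: sum.reindex)
qed

lemma piece_b:
  assumes V: "finite V" "D \<subseteq> V" and r: "r \<in> D" and x: "x \<in> V - D"
  shows "(\<Sum>E\<in>{E\<in>gr V D. {r,x}\<in>E \<and> P E}. wt f V E)
       = (\<Sum>E'\<in>{E'\<in>gr (V-{r}) (insert x (D-{r})). P (insert {r,x} E')}. wt (f \<circ> gins r x) (V-{r}) E')"
proof -
  have "{E\<in>gr V D. {r,x}\<in>E \<and> P E} = {E\<in>{E\<in>gr V D. {r,x}\<in>E}. P E}" by blast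
  also have "\<dots> = insert {r,x} ` {E'\<in>gr (V-{r}) (insert x (D-{r})). P (insert {r,x} E')}"
    unfolding bij_b[OF V r x] by (rule filter_image)
  finally have eq: "{E\<in>gr V D. {r,x}\<in>E \<and> P E} = insert {r,x} ` {E'\<in>gr (V-{r}) (insert x (D-{r})). P (insert {r,x} E')}" .
  moreover have "inj_on (insert {r,x}) {E'\<in>gr (V-{r}) (insert x (D-{r})). P (insert {r,x} E')}"
    by (rule inj_on_subset[OF inj_ins_gr[of r "V-{r}" x "insert x (D-{r})"]]) blast+
  moreover have "wt f V (insert {r,x} E') = wt (f \<circ> gins r x) (V-{r}) E'"
    if E': "E' \<in> gr (V-{r}) (insert x (D-{r}))" for E'
  proof -
    have rn: "r \<notin> \<Union>E'" using edges_in[OF E'] by auto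
    show ?thesis using wt_leaf[OF rn, of x V f] V r x by auto
  qed
  ultimately show ?thesis by (simp add: sum.reindex)
qed

definition fk :: "(nat \<Rightarrow> 'a) \<Rightarrow> nat \<Rightarrow> nat \<Rightarrow> nat set \<Rightarrow> 'a" where
  "fk h r k C = (if r \<in> C then h (card C + k) else h (card C))"

definition S0 :: "(nat \<Rightarrow> 'a::comm_ring_1) \<Rightarrow> nat set \<Rightarrow> nat set \<Rightarrow> 'a" where
  "S0 h V D = (\<Sum>E\<in>gr V D. wt (\<lambda>C. h (card C)) V E)"

definition Sk :: "(nat \<Rightarrow> 'a::comm_ring_1) \<Rightarrow> nat \<Rightarrow> nat set \<Rightarrow> nat set \<Rightarrow> nat \<Rightarrow> 'a" where
  "Sk h k V D r = (\<Sum>E\<in>gr V D. wt (fk h r k) V E)"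

definition St :: "(nat \<Rightarrow> 'a::comm_ring_1) \<Rightarrow> nat \<Rightarrow> nat set \<Rightarrow> nat set \<Rightarrow> nat \<Rightarrow> nat \<Rightarrow> 'a" where
  "St h k V D r t = (\<Sum>E\<in>{E\<in>gr V D. (adjacent E)\<^sup>*\<^sup>* r t}. wt (fk h r k) V E)"

lemma fk0: "fk h r 0 = (\<lambda>C. h (card C))"
  unfolding fk_def by auto

lemma wt_fk_a:
  assumes "r \<notin> V'"
  shows "wt (fk h r k) V' E = wt (\<lambda>C. h (card C)) V' E"
  by (rule wt_cong) (use assms in \<open>auto simp: fk_def\<close>)

lemma wt_fk_b:
  assumes "finite V" "r \<in> V"
  shows "wt (fk h r k \<circ> gins r x) (V-{r}) E = wt (fk h x (Suc k)) (V-{r}) E"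
proof (rule wt_cong)
  fix C assume C: "C \<subseteq> V - {r}"
  then have "finite C" "r \<notin> C" using assms finite_subset by auto
  then show "(fk h r k \<circ> gins r x) C = fk h x (Suc k) C"
    unfolding fk_def gins_def by auto
qed

lemma split_V:
  assumes "finite V" "D \<subseteq> V" "r \<in> D"
  shows "(\<Sum>x\<in>V-{r}. g x) = (\<Sum>x\<in>D-{r}. g x) + (\<Sum>x\<in>V-D. g x)"
proof -
  have "V - {r} = (D-{r}) \<union> (V-D)" using assms by auto
  moreover have "(D-{r}) \<inter> (V-D) = {}" by auto
  ultimately show ?thesis using assms(1,2) by (simp add: sum.union_disjoint finite_subset)
qed

lemma rec_Sk:
  assumes V: "finite V" "D \<subseteq> V" and r: "r \<in> D"
  shows "Sk h k V D r = (\<Sum>x\<in>D-{r}. h (2+k) * S0 h (V-{r,x}) (D-{r,x}))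
     + (\<Sum>x\<in>V-D. Sk h (Suc k) (V-{r}) (insert x (D-{r})) x)"
proof -
  have "Sk h k V D r = (\<Sum>E\<in>{E\<in>gr V D. True}. wt (fk h r k) V E)" unfolding Sk_def by simp
  also have "\<dots> = (\<Sum>x\<in>V-{r}. \<Sum>E\<in>{E\<in>gr V D. {r,x}\<in>E \<and> True}. wt (fk h r k) V E)"
    by (rule decomp[OF V r])
  also have "\<dots> = (\<Sum>x\<in>D-{r}. \<Sum>E\<in>{E\<in>gr V D. {r,x}\<in>E \<and> True}. wt (fk h r k) V E)
      + (\<Sum>x\<in>V-D. \<Sum>E\<in>{E\<in>gr V D. {r,x}\<in>E \<and> True}. wt (fk h r k) V E)"
    by (rule split_V[OF V r])
  also have "(\<Sum>x\<in>D-{r}. \<Sum>E\<in>{E\<in>gr V D. {r,x}\<in>E \<and> True}. wt (fk h r k) V E)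
      = (\<Sum>x\<in>D-{r}. h (2+k) * S0 h (V-{r,x}) (D-{r,x}))"
  proof (rule sum.cong[OF refl])
    fix x assume x: "x \<in> D - {r}"
    have "(\<Sum>E\<in>{E\<in>gr V D. {r,x}\<in>E \<and> True}. wt (fk h r k) V E)
       = (\<Sum>E'\<in>{E'\<in>gr (V-{r,x}) (D-{r,x}). True}. fk h r k {r,x} * wt (fk h r k) (V-{r,x}) E')"
      by (rule piece_a[OF V r]) (use x in auto)
    also have "\<dots> = (\<Sum>E'\<in>gr (V-{r,x}) (D-{r,x}). h (2+k) * wt (\<lambda>C. h (card C)) (V-{r,x}) E')"
      using x by (intro sum.cong) (auto simp: fk_def wt_fk_a)
    finally show "(\<Sum>E\<in>{E\<in>gr V D. {r,x}\<in>E \<and> True}. wt (fk h r k) V E) = h (2+k) * S0 h (V-{r,x}) (D-{r,x})"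
      unfolding S0_def by (simp add: sum_distrib_left)
  qed
  also have "(\<Sum>x\<in>V-D. \<Sum>E\<in>{E\<in>gr V D. {r,x}\<in>E \<and> True}. wt (fk h r k) V E)
      = (\<Sum>x\<in>V-D. Sk h (Suc k) (V-{r}) (insert x (D-{r})) x)"
  proof (rule sum.cong[OF refl])
    fix x assume x: "x \<in> V - D"
    have "(\<Sum>E\<in>{E\<in>gr V D. {r,x}\<in>E \<and> True}. wt (fk h r k) V E)
       = (\<Sum>E'\<in>{E'\<in>gr (V-{r}) (insert x (D-{r})). True}. wt (fk h r k \<circ> gins r x) (V-{r}) E')"
      by (rule piece_b[OF V r x])
    also have "\<dots> = Sk h (Suc k) (V-{r}) (insert x (D-{r})) x"
      unfolding Sk_def using V r by (simp add: wt_fk_b subset_iff)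
    finally show "(\<Sum>E\<in>{E\<in>gr V D. {r,x}\<in>E \<and> True}. wt (fk h r k) V E) = Sk h (Suc k) (V-{r}) (insert x (D-{r})) x" .
  qed
  finally show ?thesis .
qed

lemma rec_St:
  assumes V: "finite V" "D \<subseteq> V" and r: "r \<in> D" and t: "t \<in> D" "t \<noteq> r"
  shows "St h k V D r t = h (2+k) * S0 h (V-{r,t}) (D-{r,t})
     + (\<Sum>x\<in>V-D. St h (Suc k) (V-{r}) (insert x (D-{r})) x t)"
proof -
  let ?P = "\<lambda>E. (adjacent E)\<^sup>*\<^sup>* r t"
  have "St h k V D r t = (\<Sum>x\<in>V-{r}. \<Sum>E\<in>{E\<in>gr V D. {r,x}\<in>E \<and> ?P E}. wt (fk h r k) V E)"
    unfolding St_def by (rule decomp[OF V r])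
  also have "\<dots> = (\<Sum>x\<in>D-{r}. \<Sum>E\<in>{E\<in>gr V D. {r,x}\<in>E \<and> ?P E}. wt (fk h r k) V E)
      + (\<Sum>x\<in>V-D. \<Sum>E\<in>{E\<in>gr V D. {r,x}\<in>E \<and> ?P E}. wt (fk h r k) V E)"
    by (rule split_V[OF V r])
  also have "(\<Sum>x\<in>D-{r}. \<Sum>E\<in>{E\<in>gr V D. {r,x}\<in>E \<and> ?P E}. wt (fk h r k) V E)
      = (\<Sum>x\<in>D-{r}. if x = t then h (2+k) * S0 h (V-{r,t}) (D-{r,t}) else 0)"
  proof (rule sum.cong[OF refl])
    fix x assume x: "x \<in> D - {r}"
    have "(\<Sum>E\<in>{E\<in>gr V D. {r,x}\<in>E \<and> ?P E}. wt (fk h r k) V E)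
       = (\<Sum>E'\<in>{E'\<in>gr (V-{r,x}) (D-{r,x}). ?P (insert {r,x} E')}. fk h r k {r,x} * wt (fk h r k) (V-{r,x}) E')"
      by (rule piece_a[OF V r]) (use x in auto)
    also have "{E'\<in>gr (V-{r,x}) (D-{r,x}). ?P (insert {r,x} E')} = (if x = t then gr (V-{r,x}) (D-{r,x}) else {})"
    proof -
      have "?P (insert {r,x} E') \<longleftrightarrow> x = t" if E': "E' \<in> gr (V-{r,x}) (D-{r,x})" for E'
      proof -
        have rn: "r \<notin> \<Union>E'" "x \<notin> \<Union>E'" using edges_in[OF E'] by auto
        have "?P (insert {r,x} E') \<longleftrightarrow> (adjacent E')\<^sup>*\<^sup>* x t"
          using rtr_leaf_iff_r[OF rn(1), of x t] x t by auto
        also have "\<dots> \<longleftrightarrow> x = t" using rtr_isolated[OF rn(2), of t] by auto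
        finally show ?thesis .
      qed
      then show ?thesis by auto
    qed
    also have "(\<Sum>E'\<in>(if x = t then gr (V-{r,x}) (D-{r,x}) else {}). fk h r k {r,x} * wt (fk h r k) (V-{r,x}) E')
       = (if x = t then h (2+k) * S0 h (V-{r,t}) (D-{r,t}) else 0)"
      unfolding S0_def using x by (auto simp: fk_def wt_fk_a sum_distrib_left)
    finally show "(\<Sum>E\<in>{E\<in>gr V D. {r,x}\<in>E \<and> ?P E}. wt (fk h r k) V E) = (if x = t then h (2+k) * S0 h (V-{r,t}) (D-{r,t}) else 0)" .
  qed
  also have "\<dots> = h (2+k) * S0 h (V-{r,t}) (D-{r,t})"
    using t V by (simp add: finite_subset)
  also have "(\<Sum>x\<in>V-D. \<Sum>E\<in>{E\<in>gr V D. {r,x}\<in>E \<and> ?P E}. wt (fk h r k) V E)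
      = (\<Sum>x\<in>V-D. St h (Suc k) (V-{r}) (insert x (D-{r})) x t)"
  proof (rule sum.cong[OF refl])
    fix x assume x: "x \<in> V - D"
    have "(\<Sum>E\<in>{E\<in>gr V D. {r,x}\<in>E \<and> ?P E}. wt (fk h r k) V E)
       = (\<Sum>E'\<in>{E'\<in>gr (V-{r}) (insert x (D-{r})). ?P (insert {r,x} E')}. wt (fk h r k \<circ> gins r x) (V-{r}) E')"
      by (rule piece_b[OF V r x])
    also have "{E'\<in>gr (V-{r}) (insert x (D-{r})). ?P (insert {r,x} E')}
        = {E'\<in>gr (V-{r}) (insert x (D-{r})). (adjacent E')\<^sup>*\<^sup>* x t}"
    proof -
      have "?P (insert {r,x} E') \<longleftrightarrow> (adjacent E')\<^sup>*\<^sup>* x t" if E': "E' \<in> gr (V-{r}) (insert x (D-{r}))" for E'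
      proof -
        have rn: "r \<notin> \<Union>E'" using edges_in[OF E'] by auto
        show ?thesis using rtr_leaf_iff_r[OF rn, of x t] x t r by auto
      qed
      then show ?thesis by auto
    qed
    also have "(\<Sum>E'\<in>{E'\<in>gr (V-{r}) (insert x (D-{r})). (adjacent E')\<^sup>*\<^sup>* x t}. wt (fk h r k \<circ> gins r x) (V-{r}) E')
      = St h (Suc k) (V-{r}) (insert x (D-{r})) x t"
      unfolding St_def using V r by (simp add: wt_fk_b subset_iff)
    finally show "(\<Sum>E\<in>{E\<in>gr V D. {r,x}\<in>E \<and> ?P E}. wt (fk h r k) V E) = St h (Suc k) (V-{r}) (insert x (D-{r})) x t" .
  qed
  finally show ?thesis .
qed

lemma sum_split_pred:
  assumes "finite A"
  shows "sum g A = sum g {a\<in>A. Q a} + sum g {a\<in>A. \<not> Q a}"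
proof -
  have "A = {a\<in>A. Q a} \<union> {a\<in>A. \<not> Q a}" by auto
  moreover have "{a\<in>A. Q a} \<inter> {a\<in>A. \<not> Q a} = {}" by auto
  ultimately show ?thesis using assms
    by (metis (no_types, lifting) finite_Un sum.union_disjoint)
qed

lemma nbr_card:
  assumes V: "finite V" and E: "E \<in> gr V {}" and v: "v \<in> V"
  shows "card {x. x \<in> V-{v} \<and> {v,x} \<in> E} = 2"
proof -
  have "(\<lambda>x. {v,x}) ` {x. x \<in> V-{v} \<and> {v,x} \<in> E} = {e\<in>E. v \<in> e}"
  proof (rule set_eqI, rule iffI)
    fix e assume "e \<in> (\<lambda>x. {v,x}) ` {x. x \<in> V-{v} \<and> {v,x} \<in> E}"
    then show "e \<in> {e\<in>E. v \<in> e}" by auto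
  next
    fix e assume e: "e \<in> {e\<in>E. v \<in> e}"
    then have "e \<subseteq> V" "card e = 2" using E unfolding gr_def by auto
    then obtain a b where ab: "e = {a,b}" "a \<noteq> b" by (meson card_2_iff)
    have "\<exists>y. y \<in> V - {v} \<and> e = {v,y}"
    proof (cases "a = v")
      case True then show ?thesis using ab \<open>e \<subseteq> V\<close> by auto
    next
      case False then have "b = v" using ab e by auto
      then have "e = {v,a}" using ab by (simp add: insert_commute)
      then show ?thesis using False \<open>e \<subseteq> V\<close> by auto
    qed
    then obtain y where "y \<in> V - {v}" "e = {v,y}" by blast
    then show "e \<in> (\<lambda>x. {v,x}) ` {x. x \<in> V-{v} \<and> {v,x} \<in> E}" using e by blast
  qed
  moreover have "inj_on (\<lambda>x. {v,x}) {x. x \<in> V-{v} \<and> {v,x} \<in> E}"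
    by (rule inj_onI) (auto simp: doubleton_eq_iff)
  moreover have "card {e\<in>E. v \<in> e} = 2" using E v unfolding gr_def degree_def by auto
  ultimately show ?thesis using card_image by fastforce
qed

lemma cyc_double:
  assumes V: "finite V" and v: "v \<in> V"
  shows "2 * S0 h V {} = (\<Sum>x\<in>V-{v}. \<Sum>E\<in>{E\<in>gr V {}. {v,x}\<in>E}. wt (\<lambda>C. h (card C)) V E)"
proof -
  let ?w = "\<lambda>E. wt (\<lambda>C. h (card C)) V E"
  have fB: "finite (gr V {})" using finite_gr[OF V] .
  have "(\<Sum>x\<in>V-{v}. \<Sum>E\<in>{E\<in>gr V {}. {v,x}\<in>E}. ?w E) = (\<Sum>E\<in>gr V {}. \<Sum>x | x\<in>V-{v} \<and> {v,x}\<in>E. ?w E)"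
    by (rule sum.swap_restrict) (use V fB in auto)
  also have "\<dots> = (\<Sum>E\<in>gr V {}. 2 * ?w E)"
    by (rule sum.cong[OF refl]) (simp add: nbr_card[OF V _ v, simplified])
  finally show ?thesis unfolding S0_def by (simp add: sum_distrib_left)
qed

lemma bij_c:
  assumes V: "finite V" and v: "v \<in> V" and x: "x \<in> V" "x \<noteq> v"
  shows "{E\<in>gr V {}. {v,x}\<in>E} = insert {v,x} ` {E'\<in>gr V {v,x}. {v,x} \<notin> E'}"
proof
  show "{E\<in>gr V {}. {v,x}\<in>E} \<subseteq> insert {v,x} ` {E'\<in>gr V {v,x}. {v,x} \<notin> E'}"
  proof
    fix E assume E: "E \<in> {E\<in>gr V {}. {v,x}\<in>E}"
    then have EG: "E \<in> gr V {}" and ex: "{v,x} \<in> E" by auto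
    have fE: "finite E" using gr_finite_E EG V by blast
    define E' where "E' = E - {{v,x}}"
    have EE: "E = insert {v,x} E'" "{v,x} \<notin> E'" "finite E'" using ex fE unfolding E'_def by auto
    have deg: "degree E w = degree E' w + (if w \<in> {v,x} then 1 else 0)" for w
      using degree_insert[OF EE(3,2)] EE(1) by simp
    have "E' \<in> gr V {v,x}"
      unfolding gr_def
    proof (intro CollectI conjI ballI)
      fix e assume "e \<in> E'" then show "e \<subseteq> V" "card e = 2"
        using EG unfolding gr_def E'_def by auto
    next
      fix w assume w: "w \<in> {v,x}"
      then show "degree E' w = 1" using deg[of w] EG v x unfolding gr_def by auto
    next
      fix w assume w: "w \<in> V - {v,x}"
      then show "degree E' w = 2" using deg[of w] EG unfolding gr_def by auto
    qed
    then show "E \<in> insert {v,x} ` {E'\<in>gr V {v,x}. {v,x} \<notin> E'}" using EE(1,2) by blast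
  qed
next
  show "insert {v,x} ` {E'\<in>gr V {v,x}. {v,x} \<notin> E'} \<subseteq> {E\<in>gr V {}. {v,x}\<in>E}"
  proof
    fix E assume "E \<in> insert {v,x} ` {E'\<in>gr V {v,x}. {v,x} \<notin> E'}"
    then obtain E' where E': "E' \<in> gr V {v,x}" "{v,x} \<notin> E'" and EE: "E = insert {v,x} E'" by blast
    have fE: "finite E'" using gr_finite_E E' V by blast
    have deg: "degree E w = degree E' w + (if w \<in> {v,x} then 1 else 0)" for w
      using degree_insert[OF fE E'(2)] EE by simp
    have "E \<in> gr V {}"
      unfolding gr_def
    proof (intro CollectI conjI ballI)
      fix e assume "e \<in> E" then show "e \<subseteq> V" "card e = 2"
        using E' EE v x unfolding gr_def by auto
    next
      fix w assume "w \<in> ({}::nat set)" then show "degree E w = 1" by simp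
    next
      fix w assume w: "w \<in> V - {}"
      show "degree E w = 2"
      proof (cases "w \<in> {v,x}")
        case True then show ?thesis using deg[of w] E'(1) unfolding gr_def by auto
      next
        case False then show ?thesis using deg[of w] E'(1) w unfolding gr_def by auto
      qed
    qed
    then show "E \<in> {E\<in>gr V {}. {v,x}\<in>E}" using EE by auto
  qed
qed

lemma adj_add_conn:
  assumes "(adjacent E')\<^sup>*\<^sup>* v x"
  shows "(adjacent (insert {v,x} E'))\<^sup>*\<^sup>* = (adjacent E')\<^sup>*\<^sup>*"
proof (intro ext iffI)
  fix a b assume "(adjacent (insert {v,x} E'))\<^sup>*\<^sup>* a b"
  then show "(adjacent E')\<^sup>*\<^sup>* a b"
  proof (induction rule: rtranclp_induct)
    case base then show ?case by simp
  next
    case (step y z)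
    from step(2) have "{y,z} = {v,x} \<or> adjacent E' y z" unfolding adjacent_def by auto
    then show ?case
    proof
      assume "{y,z} = {v,x}"
      then have "(adjacent E')\<^sup>*\<^sup>* y z" using assms rtr_sym by (auto simp: doubleton_eq_iff)
      then show ?thesis using rtranclp_trans[OF step(3)] by blast
    next
      assume "adjacent E' y z" then show ?thesis using step(3) by (simp add: rtranclp.rtrancl_into_rtrancl)
    qed
  qed
next
  fix a b assume "(adjacent E')\<^sup>*\<^sup>* a b" then show "(adjacent (insert {v,x} E'))\<^sup>*\<^sup>* a b"
    by (rule adj_mono)
qed

lemma inj_ins_notin: "inj_on (insert e) {A. e \<notin> A \<and> Q A}"
  by (rule inj_onI) (metis (no_types, lifting) Diff_insert_absorb mem_Collect_eq)

lemma cyc_piece: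
  assumes V: "finite V" and v: "v \<in> V" and x: "x \<in> V" "x \<noteq> v"
    and conn: "\<forall>E'\<in>gr V {v,x}. (adjacent E')\<^sup>*\<^sup>* v x"
  shows "(\<Sum>E\<in>{E\<in>gr V {}. {v,x}\<in>E}. wt (\<lambda>C. h (card C)) V E)
       = Sk h 0 V {v,x} v - h 2 * S0 h (V-{v,x}) {}"
proof -
  let ?w = "\<lambda>E. wt (\<lambda>C. h (card C)) V E"
  have D: "{v,x} \<subseteq> V" using v x by auto
  have fA: "finite (gr V {v,x})" using finite_gr[OF V] .
  have "(\<Sum>E\<in>{E\<in>gr V {}. {v,x}\<in>E}. ?w E) = (\<Sum>E'\<in>{E'\<in>gr V {v,x}. {v,x} \<notin> E'}. ?w (insert {v,x} E'))"
    unfolding bij_c[OF V v x]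
    by (rule sum.reindex[unfolded comp_def]) (rule inj_on_subset[OF inj_ins_notin[of "{v,x}" "\<lambda>A. A \<in> gr V {v,x}"]], auto)
  also have "\<dots> = (\<Sum>E'\<in>{E'\<in>gr V {v,x}. {v,x} \<notin> E'}. ?w E')"
  proof (rule sum.cong[OF refl])
    fix E' assume "E' \<in> {E'\<in>gr V {v,x}. {v,x} \<notin> E'}"
    then have "(adjacent E')\<^sup>*\<^sup>* v x" using conn by auto
    then have "comps V (insert {v,x} E') = comps V E'"
      unfolding comps_def using adj_add_conn by metis
    then show "?w (insert {v,x} E') = ?w E'" unfolding wt_def by simp
  qed
  also have "\<dots> = Sk h 0 V {v,x} v - h 2 * S0 h (V-{v,x}) {}"
  proof -
    have "Sk h 0 V {v,x} v = (\<Sum>E'\<in>gr V {v,x}. ?w E')" unfolding Sk_def fk0 ..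
    also have "\<dots> = (\<Sum>E'\<in>{E'\<in>gr V {v,x}. {v,x} \<in> E'}. ?w E') + (\<Sum>E'\<in>{E'\<in>gr V {v,x}. {v,x} \<notin> E'}. ?w E')"
      by (rule sum_split_pred[OF fA])
    also have "(\<Sum>E'\<in>{E'\<in>gr V {v,x}. {v,x} \<in> E'}. ?w E') = h 2 * S0 h (V-{v,x}) {}"
    proof -
      have "(\<Sum>E'\<in>{E'\<in>gr V {v,x}. {v,x} \<in> E' \<and> True}. ?w E')
          = (\<Sum>E''\<in>{E''\<in>gr (V-{v,x}) ({v,x}-{v,x}). True}. h (card {v,x}) * wt (\<lambda>C. h (card C)) (V-{v,x}) E'')"
        by (rule piece_a[OF V D]) (use x in auto)
      moreover have "card {v,x} = 2" using x by simp
      ultimately show ?thesis unfolding S0_def by (simp add: sum_distrib_left)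
    qed
    finally show ?thesis by simp
  qed
  finally show ?thesis .
qed

fun Bf :: "(nat \<Rightarrow> nat \<Rightarrow> 'a::comm_ring_1) \<Rightarrow> (nat \<Rightarrow> 'a) \<Rightarrow> nat \<Rightarrow> nat \<Rightarrow> nat \<Rightarrow> 'a" where
  "Bf A h k d 0 = h (2+k) * A (d-2) 0"
| "Bf A h k d (Suc m) = h (2+k) * A (d-2) (Suc m) + of_nat (Suc m) * Bf A h (Suc k) d m"

lemma Bf_rec: "Bf A h k d n = h (2+k) * A (d-2) n + of_nat n * Bf A h (Suc k) d (n-1)"
  by (cases n) auto

definition recs :: "(nat \<Rightarrow> 'a::field_char_0) \<Rightarrow> (nat \<Rightarrow> nat \<Rightarrow> 'a) \<Rightarrow> bool" where
  "recs h A \<longleftrightarrow> A 0 0 = 1 \<and> (\<forall>d n2. 1 \<le> d \<longrightarrow> A d n2 = of_nat (d-1) * Bf A h 0 d n2)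
     \<and> (\<forall>n. 1 \<le> n \<longrightarrow> 2 * A 0 n = of_nat ((n-1)*(n-2)) * Bf A h 1 2 (n-3))"

lemma card_D2: "finite D \<Longrightarrow> r \<in> D \<Longrightarrow> x \<in> D \<Longrightarrow> x \<noteq> r \<Longrightarrow> card (D - {r,x}) = card D - 2"
  by (simp add: card_Diff_subset)

lemma card_ins: "finite D \<Longrightarrow> r \<in> D \<Longrightarrow> x \<notin> D \<Longrightarrow> card (insert x (D - {r})) = card D"
  by (metis card.remove card_insert_disjoint finite_Diff Diff_iff)

lemma card_VD1: "finite V \<Longrightarrow> D \<subseteq> V \<Longrightarrow> r \<in> D \<Longrightarrow> x \<in> V - D \<Longrightarrow>
   card (V - {r} - insert x (D - {r})) = card (V - D) - 1"
proof -
  assume a: "finite V" "D \<subseteq> V" "r \<in> D" "x \<in> V - D"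
  have "V - {r} - insert x (D - {r}) = (V - D) - {x}" using a by auto
  then show ?thesis using a by simp
qed

lemma wt_one: "wt (fk (\<lambda>_. 1) r k) V E = 1"
  unfolding wt_def fk_def by simp

lemma S0_empty: "S0 h {} {} = 1"
proof -
  have "gr {} {} = {{}}" unfolding gr_def by auto
  moreover have "comps {} {} = {}" unfolding comps_def by simp
  ultimately show ?thesis unfolding S0_def wt_def by simp
qed

lemma step_I3:
  fixes h :: "nat \<Rightarrow> 'a::field_char_0" and A :: "nat \<Rightarrow> nat \<Rightarrow> 'a"
  assumes V: "finite V" "D \<subseteq> V" and r: "r \<in> D"
    and IH0: "\<And>x. x \<in> D - {r} \<Longrightarrow> S0 h (V-{r,x}) (D-{r,x}) = A (card (D-{r,x})) (card ((V-{r,x}) - (D-{r,x})))"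
    and IHk: "\<And>x. x \<in> V - D \<Longrightarrow> Sk h (Suc k) (V-{r}) (insert x (D-{r})) x
        = of_nat (card (insert x (D-{r})) - 1) * Bf A h (Suc k) (card (insert x (D-{r}))) (card (V - {r} - insert x (D-{r})))"
  shows "Sk h k V D r = of_nat (card D - 1) * Bf A h k (card D) (card (V-D))"
proof -
  have fD: "finite D" using V finite_subset by blast
  have a: "S0 h (V-{r,x}) (D-{r,x}) = A (card D - 2) (card (V-D))" if x: "x \<in> D - {r}" for x
  proof -
    have "(V-{r,x}) - (D-{r,x}) = V - D" using r x by auto
    then show ?thesis using IH0[OF x] card_D2[OF fD r] x by auto
  qed
  have b: "Sk h (Suc k) (V-{r}) (insert x (D-{r})) x = of_nat (card D - 1) * Bf A h (Suc k) (card D) (card (V-D) - 1)"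
    if x: "x \<in> V - D" for x
    using IHk[OF x] card_ins[OF fD r] card_VD1[OF V r x] x by auto
  have "Sk h k V D r = (\<Sum>x\<in>D-{r}. h (2+k) * S0 h (V-{r,x}) (D-{r,x}))
     + (\<Sum>x\<in>V-D. Sk h (Suc k) (V-{r}) (insert x (D-{r})) x)" by (rule rec_Sk[OF V r])
  also have "\<dots> = (\<Sum>x\<in>D-{r}. h (2+k) * A (card D - 2) (card (V-D)))
     + (\<Sum>x\<in>V-D. of_nat (card D - 1) * Bf A h (Suc k) (card D) (card (V-D) - 1))"
    using a b by simp
  also have "\<dots> = of_nat (card D - 1) * (h (2+k) * A (card D - 2) (card (V-D)))
     + of_nat (card (V-D)) * (of_nat (card D - 1) * Bf A h (Suc k) (card D) (card (V-D) - 1))"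
    using fD r by simp
  also have "\<dots> = of_nat (card D - 1) * Bf A h k (card D) (card (V-D))"
    by (subst (2) Bf_rec) (simp add: algebra_simps)
  finally show ?thesis .
qed

lemma step_I2:
  fixes h :: "nat \<Rightarrow> 'a::field_char_0" and A :: "nat \<Rightarrow> nat \<Rightarrow> 'a"
  assumes V: "finite V" "D \<subseteq> V" and r: "r \<in> D" and t: "t \<in> D" "t \<noteq> r"
    and IH0: "S0 h (V-{r,t}) (D-{r,t}) = A (card (D-{r,t})) (card ((V-{r,t}) - (D-{r,t})))"
    and IHt: "\<And>x. x \<in> V - D \<Longrightarrow> St h (Suc k) (V-{r}) (insert x (D-{r})) x t
        = Bf A h (Suc k) (card (insert x (D-{r}))) (card (V - {r} - insert x (D-{r})))"
  shows "St h k V D r t = Bf A h k (card D) (card (V-D))"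
proof -
  have fD: "finite D" using V finite_subset by blast
  have a: "S0 h (V-{r,t}) (D-{r,t}) = A (card D - 2) (card (V-D))"
  proof -
    have "(V-{r,t}) - (D-{r,t}) = V - D" using r t by auto
    then show ?thesis using IH0 card_D2[OF fD r t] by auto
  qed
  have b: "St h (Suc k) (V-{r}) (insert x (D-{r})) x t = Bf A h (Suc k) (card D) (card (V-D) - 1)"
    if x: "x \<in> V - D" for x
    using IHt[OF x] card_ins[OF fD r] card_VD1[OF V r x] x by auto
  have "St h k V D r t = h (2+k) * S0 h (V-{r,t}) (D-{r,t})
     + (\<Sum>x\<in>V-D. St h (Suc k) (V-{r}) (insert x (D-{r})) x t)" by (rule rec_St[OF V r t])
  also have "\<dots> = h (2+k) * A (card D - 2) (card (V-D))
     + of_nat (card (V-D)) * Bf A h (Suc k) (card D) (card (V-D) - 1)"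
    using a b by simp
  also have "\<dots> = Bf A h k (card D) (card (V-D))"
    by (subst (2) Bf_rec) simp
  finally show ?thesis .
qed




lemma comb_main:
  fixes A1 :: "nat \<Rightarrow> nat \<Rightarrow> 'a::field_char_0"
  assumes R1: "recs (\<lambda>_. 1) A1"
  shows "finite V \<Longrightarrow>
   (\<forall>h (A :: nat \<Rightarrow> nat \<Rightarrow> 'a). recs h A \<longrightarrow>
     (\<forall>D r k. D \<subseteq> V \<longrightarrow> r \<in> D \<longrightarrow> Sk h k V D r = of_nat (card D - 1) * Bf A h k (card D) (card (V-D))) \<and>
     (\<forall>D r t k. D \<subseteq> V \<longrightarrow> r \<in> D \<longrightarrow> t \<in> D \<longrightarrow> t \<noteq> r \<longrightarrow> St h k V D r t = Bf A h k (card D) (card (V-D))) \<and>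
     (\<forall>D. D \<subseteq> V \<longrightarrow> S0 h V D = A (card D) (card (V-D))))
   \<and> (\<forall>v x. v \<in> V \<longrightarrow> x \<in> V \<longrightarrow> x \<noteq> v \<longrightarrow> (\<forall>E\<in>gr V {v,x}. (adjacent E)\<^sup>*\<^sup>* v x))"
proof (induction "card V" arbitrary: V rule: less_induct)
  case less
  note V = less.prems
  note IH = less.hyps
  have IH3: "Sk h k V' D r = of_nat (card D - 1) * Bf A h k (card D) (card (V'-D))"
    if "card V' < card V" "finite V'" "recs h A" "D \<subseteq> V'" "r \<in> D" for V' and h :: "nat \<Rightarrow> 'a" and A D r k
    using IH[OF that(1) that(2), THEN conjunct1, rule_format, OF that(3), THEN conjunct1, rule_format, OF that(4,5)] .
  have IH2: "St h k V' D r t = Bf A h k (card D) (card (V'-D))"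
    if "card V' < card V" "finite V'" "recs h A" "D \<subseteq> V'" "r \<in> D" "t \<in> D" "t \<noteq> r" for V' and h :: "nat \<Rightarrow> 'a" and A D r t k
    using IH[OF that(1) that(2), THEN conjunct1, rule_format, OF that(3), THEN conjunct2, THEN conjunct1, rule_format, OF that(4-7)] .
  have IH1: "S0 h V' D = A (card D) (card (V'-D))"
    if "card V' < card V" "finite V'" "recs h A" "D \<subseteq> V'" for V' and h :: "nat \<Rightarrow> 'a" and A D
    using IH[OF that(1) that(2), THEN conjunct1, rule_format, OF that(3), THEN conjunct2, THEN conjunct2, rule_format, OF that(4)] .
  have I23: "(\<forall>D r k. D \<subseteq> V \<longrightarrow> r \<in> D \<longrightarrow> Sk h k V D r = of_nat (card D - 1) * Bf A h k (card D) (card (V-D))) \<and>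
     (\<forall>D r t k. D \<subseteq> V \<longrightarrow> r \<in> D \<longrightarrow> t \<in> D \<longrightarrow> t \<noteq> r \<longrightarrow> St h k V D r t = Bf A h k (card D) (card (V-D)))"
    if rA: "recs h A" for h :: "nat \<Rightarrow> 'a" and A
  proof (intro conjI allI impI)
    fix D r k assume D: "D \<subseteq> V" and r: "r \<in> D"
    show "Sk h k V D r = of_nat (card D - 1) * Bf A h k (card D) (card (V-D))"
    proof (rule step_I3[OF V D r])
      fix x assume x: "x \<in> D - {r}"
      have rV: "r \<in> V" and xV: "x \<in> V" using D r x by auto
      have e: "V-{r,x} = V-{r}-{x}" by auto
      have lt: "card (V-{r,x}) < card V" unfolding e by (rule card_Diff2_less[OF V rV xV])
      have sub: "D-{r,x} \<subseteq> V-{r,x}" using D by auto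
      have fin: "finite (V-{r,x})" using V by simp
      show "S0 h (V-{r,x}) (D-{r,x}) = A (card (D-{r,x})) (card ((V-{r,x}) - (D-{r,x})))"
        by (rule IH1[OF lt fin rA sub])
    next
      fix x assume x: "x \<in> V - D"
      have rV: "r \<in> V" using D r by auto
      have lt: "card (V-{r}) < card V" by (rule card_Diff1_less[OF V rV])
      have fin: "finite (V-{r})" using V by simp
      have sub: "insert x (D-{r}) \<subseteq> V-{r}" using x D r by auto
      show "Sk h (Suc k) (V-{r}) (insert x (D-{r})) x
        = of_nat (card (insert x (D-{r})) - 1) * Bf A h (Suc k) (card (insert x (D-{r}))) (card (V - {r} - insert x (D-{r})))"
        by (rule IH3[OF lt fin rA sub insertI1])
    qed
  next
    fix D r t k assume D: "D \<subseteq> V" and r: "r \<in> D" and t: "t \<in> D" and tr: "t \<noteq> r"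
    show "St h k V D r t = Bf A h k (card D) (card (V-D))"
    proof (rule step_I2[OF V D r t tr])
      have rV: "r \<in> V" and tV: "t \<in> V" using D r t by auto
      have e: "V-{r,t} = V-{r}-{t}" by auto
      have lt: "card (V-{r,t}) < card V" unfolding e by (rule card_Diff2_less[OF V rV tV])
      have sub: "D-{r,t} \<subseteq> V-{r,t}" using D by auto
      have fin: "finite (V-{r,t})" using V by simp
      show "S0 h (V-{r,t}) (D-{r,t}) = A (card (D-{r,t})) (card ((V-{r,t}) - (D-{r,t})))"
        by (rule IH1[OF lt fin rA sub])
    next
      fix x assume x: "x \<in> V - D"
      have rV: "r \<in> V" using D r by auto
      have lt: "card (V-{r}) < card V" by (rule card_Diff1_less[OF V rV])
      have fin: "finite (V-{r})" using V by simp
      have sub: "insert x (D-{r}) \<subseteq> V-{r}" using x D r by auto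
      have tin: "t \<in> insert x (D-{r})" "t \<noteq> x" using x t tr by auto
      show "St h (Suc k) (V-{r}) (insert x (D-{r})) x t
        = Bf A h (Suc k) (card (insert x (D-{r}))) (card (V - {r} - insert x (D-{r})))"
        by (rule IH2[OF lt fin rA sub insertI1 tin])
    qed
  qed
  have conn: "\<forall>v x. v \<in> V \<longrightarrow> x \<in> V \<longrightarrow> x \<noteq> v \<longrightarrow> (\<forall>E\<in>gr V {v,x}. (adjacent E)\<^sup>*\<^sup>* v x)"
  proof (intro allI impI)
    fix v x assume v: "v \<in> V" and x: "x \<in> V" and xv: "x \<noteq> v"
    have D: "{v,x} \<subseteq> V" using v x by auto
    let ?G = "gr V {v,x}" and ?H = "{E\<in>gr V {v,x}. (adjacent E)\<^sup>*\<^sup>* v x}"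
    have "Sk (\<lambda>_. 1) 0 V {v,x} v = of_nat (card {v,x} - 1) * Bf A1 (\<lambda>_. 1) 0 (card {v,x}) (card (V-{v,x}))"
      using I23[OF R1, THEN conjunct1, rule_format, OF D insertI1] .
    moreover have "St (\<lambda>_. 1) 0 V {v,x} v x = Bf A1 (\<lambda>_. 1) 0 (card {v,x}) (card (V-{v,x}))"
      using I23[OF R1, THEN conjunct2, rule_format, OF D insertI1 insertI2[OF insertI1] xv] .
    moreover have "Sk (\<lambda>_. 1) 0 V {v,x} v = (of_nat (card ?G) :: 'a)"
      unfolding Sk_def wt_one by simp
    moreover have "St (\<lambda>_. 1) 0 V {v,x} v x = (of_nat (card ?H) :: 'a)"
      unfolding St_def wt_one by simp
    moreover have "card {v,x} = 2" using xv by simp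
    ultimately have "(of_nat (card ?G) :: 'a) = of_nat (card ?H)" by simp
    then have "card ?G = card ?H" by (simp only: of_nat_eq_iff)
    then have "?H = ?G" using finite_gr[OF V] by (intro card_subset_eq) auto
    then show "\<forall>E\<in>gr V {v,x}. (adjacent E)\<^sup>*\<^sup>* v x" by blast
  qed
  have I1: "S0 h V D = A (card D) (card (V-D))" if rA: "recs h A" and D: "D \<subseteq> V"
    for h :: "nat \<Rightarrow> 'a" and A D
  proof (cases "D = {}")
    case False
    then obtain r where r: "r \<in> D" by blast
    have fD: "finite D" using V D finite_subset by blast
    have "S0 h V D = Sk h 0 V D r" unfolding S0_def Sk_def fk0 ..
    also have "\<dots> = of_nat (card D - 1) * Bf A h 0 (card D) (card (V-D))" using I23[OF rA, THEN conjunct1, rule_format, OF D r] .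
    also have "\<dots> = A (card D) (card (V-D))"
    proof -
      have "1 \<le> card D" using fD r by (metis One_nat_def Suc_leI card_gt_0_iff empty_iff)
      moreover have "\<forall>d n2. 1 \<le> d \<longrightarrow> A d n2 = of_nat (d-1) * Bf A h 0 d n2" using rA unfolding recs_def by blast
      ultimately show ?thesis by simp
    qed
    finally show ?thesis .
  next
    case True
    note D0 = True
    show ?thesis
    proof (cases "V = {}")
      case True
      then show ?thesis using D0 S0_empty rA unfolding recs_def by simp
    next
      case False
      then obtain v where v: "v \<in> V" by blast
      let ?n = "card V"
      have "card V > 0" using V v card_gt_0_iff by blast
      then have n1: "1 \<le> ?n" by simp
      have px: "(\<Sum>E\<in>{E\<in>gr V {}. {v,x}\<in>E}. wt (\<lambda>C. h (card C)) V E)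
           = Bf A h 0 2 (?n - 2) - h 2 * A 0 (?n - 2)" if x: "x \<in> V - {v}" for x
      proof -
        have xv: "x \<in> V" "x \<noteq> v" using x by auto
        have c2: "card {v,x} = 2" using xv by simp
        have Dvx: "{v,x} \<subseteq> V" using xv v by simp
        have cV: "card (V - {v,x}) = ?n - 2" using V v xv by (simp add: card_Diff_subset)
        have e: "V-{v,x} = V-{v}-{x}" by auto
        have "card (V-{v,x}) < card V" unfolding e by (rule card_Diff2_less[OF V v xv(1)])
        then have s0: "S0 h (V-{v,x}) {} = A 0 (?n - 2)" using IH1[of "V-{v,x}" h A "{}"] V rA cV by auto
        have sk: "Sk h 0 V {v,x} v = Bf A h 0 2 (?n - 2)"
          using I23[OF rA, THEN conjunct1, rule_format, OF Dvx insertI1] c2 cV by simp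
        have cv: "\<forall>E'\<in>gr V {v,x}. (adjacent E')\<^sup>*\<^sup>* v x" using conn v xv by blast
        show ?thesis using cyc_piece[OF V v xv cv, of h] s0 sk by simp
      qed
      have "2 * S0 h V D = (\<Sum>x\<in>V-{v}. \<Sum>E\<in>{E\<in>gr V {}. {v,x}\<in>E}. wt (\<lambda>C. h (card C)) V E)"
        unfolding D0 by (rule cyc_double[OF V v])
      also have "\<dots> = of_nat (?n - 1) * (Bf A h 0 2 (?n - 2) - h 2 * A 0 (?n - 2))"
        using px V v by simp
      also have "\<dots> = of_nat ((?n - 1) * (?n - 2)) * Bf A h 1 2 (?n - 3)"
      proof (cases "?n - 2")
        case 0 then show ?thesis by simp
      next
        case (Suc m)
        then have "?n - 3 = m" by simp
        then show ?thesis using Suc by (simp add: algebra_simps numeral_2_eq_2[symmetric])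
      qed
      also have "\<dots> = 2 * A 0 ?n" using rA n1 unfolding recs_def by simp
      finally show ?thesis using D0 by simp
    qed
  qed
  show ?case
  proof (rule conjI)
    show "\<forall>h (A :: nat \<Rightarrow> nat \<Rightarrow> 'a). recs h A \<longrightarrow>
     (\<forall>D r k. D \<subseteq> V \<longrightarrow> r \<in> D \<longrightarrow> Sk h k V D r = of_nat (card D - 1) * Bf A h k (card D) (card (V-D))) \<and>
     (\<forall>D r t k. D \<subseteq> V \<longrightarrow> r \<in> D \<longrightarrow> t \<in> D \<longrightarrow> t \<noteq> r \<longrightarrow> St h k V D r t = Bf A h k (card D) (card (V-D))) \<and>
     (\<forall>D. D \<subseteq> V \<longrightarrow> S0 h V D = A (card D) (card (V-D)))"
    proof (intro allI impI)
      fix h :: "nat \<Rightarrow> 'a" and A :: "nat \<Rightarrow> nat \<Rightarrow> 'a" assume rA: "recs h A"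
      have "\<forall>D. D \<subseteq> V \<longrightarrow> S0 h V D = A (card D) (card (V-D))" using I1[OF rA] by blast
      then show "(\<forall>D r k. D \<subseteq> V \<longrightarrow> r \<in> D \<longrightarrow> Sk h k V D r = of_nat (card D - 1) * Bf A h k (card D) (card (V-D))) \<and>
     (\<forall>D r t k. D \<subseteq> V \<longrightarrow> r \<in> D \<longrightarrow> t \<in> D \<longrightarrow> t \<noteq> r \<longrightarrow> St h k V D r t = Bf A h k (card D) (card (V-D))) \<and>
     (\<forall>D. D \<subseteq> V \<longrightarrow> S0 h V D = A (card D) (card (V-D)))"
        using I23[OF rA] by (intro conjI) (elim conjE; assumption)+
    qed
    show "\<forall>v x. v \<in> V \<longrightarrow> x \<in> V \<longrightarrow> x \<noteq> v \<longrightarrow> (\<forall>E\<in>gr V {v,x}. (adjacent E)\<^sup>*\<^sup>* v x)"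
      by (rule conn)
  qed
qed



definition hh :: "nat \<Rightarrow> (nat \<Rightarrow> 'a::field_char_0) \<Rightarrow> nat \<Rightarrow> 'a" where
  "hh q u j = (if 2 \<le> j \<and> j \<le> q then u j else 1)"

lemma sum_X_nth:
  "fps_nth (\<Sum>j\<in>S. fps_const (c j) * fps_X ^ g j) n = (\<Sum>j\<in>S. if n = g j then c j else 0)"
  by (simp add: fps_sum_nth) (rule sum.cong; simp)

lemma Path_nth: "fps_nth (Path_fps q u) j = hh q u (j+2)"
proof -
  have "fps_nth (inverse (1 - fps_X) :: 'a fps) j = 1"
    by (simp add: fps_inverse_one_minus_fps_X)
  moreover have "(\<Sum>i\<in>{2..q}. if j = i - 2 then u i - 1 else 0) = (if 2 \<le> j+2 \<and> j+2 \<le> q then u (j+2) - 1 else 0)"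
  proof -
    have "(\<Sum>i\<in>{2..q}. if j = i - 2 then u i - 1 else 0) = (\<Sum>i\<in>{2..q}. if i = j+2 then u i - 1 else 0)"
      by (rule sum.cong) auto
    then show ?thesis by simp
  qed
  ultimately show ?thesis unfolding Path_fps_def hh_def
    by (simp add: sum_X_nth)
qed

lemma log_nth: "fps_nth (log_inv_one_minus :: 'a::field_char_0 fps) k = (if k = 0 then 0 else 1 / of_nat k)"
proof -
  have "(- 1 :: 'a) ^ k * (- 1) ^ (k - 1) = - 1" if "k > 0" for k
    using that by (cases k) auto
  then show ?thesis unfolding log_inv_one_minus_def fps_compose_uminus'
    by (auto simp: fps_ln_nth)
qed

lemma Cycle_nth: "fps_nth (Cycle_fps q u) k = (if 3 \<le> k then hh q u k / (2 * of_nat k) else 0)"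
proof -
  have s: "(\<Sum>j\<in>{3..q}. if k = j then (u j - 1) / (2 * of_nat j) else 0) = (if 3 \<le> k \<and> k \<le> q then (u k - 1) / (2 * of_nat k) else 0)"
  proof -
    have "(\<Sum>j\<in>{3..q}. if k = j then (u j - 1) / (2 * of_nat j) else 0) = (\<Sum>j\<in>{3..q}. if j = k then (u j - 1) / (2 * of_nat j) else 0)"
      by (rule sum.cong) auto
    then show ?thesis by simp
  qed
  show ?thesis
    unfolding Cycle_fps_def
    apply (simp add: sum_X_nth s log_nth fps_X_power_nth)
    apply (auto simp: hh_def field_simps numeral_2_eq_2)
    done
qed

lemma Bf_closed:
  fixes A :: "nat \<Rightarrow> nat \<Rightarrow> 'a::field_char_0"
  shows "Bf A h k d n = (\<Sum>j\<le>n. of_nat (fact n) / of_nat (fact (n-j)) * h (j+2+k) * A (d-2) (n-j))"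
proof (induction n arbitrary: k)
  case 0 then show ?case by (simp add: add.commute)
next
  case (Suc m)
  have "(\<Sum>j\<le>Suc m. of_nat (fact (Suc m)) / of_nat (fact (Suc m - j)) * h (j+2+k) * A (d-2) (Suc m - j))
     = h (2+k) * A (d-2) (Suc m) + (\<Sum>j\<le>m. of_nat (fact (Suc m)) / of_nat (fact (m - j)) * h (j+2+Suc k) * A (d-2) (m - j))"
    by (subst sum.atMost_Suc_shift) (simp add: add.commute add.left_commute del: fact_Suc)
  also have "(\<Sum>j\<le>m. of_nat (fact (Suc m)) / of_nat (fact (m - j)) * h (j+2+Suc k) * A (d-2) (m - j))
     = of_nat (Suc m) * (\<Sum>j\<le>m. of_nat (fact m) / of_nat (fact (m - j)) * h (j+2+Suc k) * A (d-2) (m - j))"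
    by (simp add: sum_distrib_left algebra_simps of_nat_mult fact_Suc)
  finally show ?case using Suc by simp
qed

definition Hf :: "nat \<Rightarrow> (nat \<Rightarrow> 'a::field_char_0) \<Rightarrow> 'a fps" where
  "Hf q u = fps_exp 1 oo Cycle_fps q u"

definition cc :: "nat \<Rightarrow> 'a::field_char_0" where
  "cc d = of_nat (fact d) / (2 ^ (d div 2) * of_nat (fact (d div 2)))"

definition Acl :: "nat \<Rightarrow> (nat \<Rightarrow> 'a::field_char_0) \<Rightarrow> nat \<Rightarrow> nat \<Rightarrow> 'a" where
  "Acl q u d n2 = (if even d then cc d * of_nat (fact n2) * fps_nth (Hf q u * Path_fps q u ^ (d div 2)) n2 else 0)"

lemma cc_step: "(cc (2*m+2) :: 'a::field_char_0) = of_nat (2*m+1) * cc (2*m)"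
proof -
  have a: "(2*m+2) div 2 = Suc m" "(2*m) div 2 = m" by auto
  have f1: "(fact (2*m+2) :: 'a) = 2 * of_nat (Suc m) * (of_nat (2*m+1) * fact (2*m))"
  proof -
    have "(fact (2*m+2) :: 'a) = of_nat (fact (2*m+2))" by (rule of_nat_fact[symmetric])
    also have "fact (2*m+2) = (2*m+2) * ((2*m+1) * fact (2*m) :: nat)" by (simp add: fact_Suc algebra_simps)
    finally show ?thesis by (simp add: of_nat_mult)
  qed
  have f2: "(fact (Suc m) :: 'a) = of_nat (Suc m) * fact m" by (simp add: fact_Suc)
  have nz1: "(of_nat (Suc m) :: 'a) \<noteq> 0" by (metis of_nat_eq_0_iff nat.distinct(1))
  have nz: "(of_nat (Suc m) :: 'a) \<noteq> 0" "(fact m :: 'a) \<noteq> 0" "(2::'a)^m \<noteq> 0" using nz1 by auto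
  have num: "(fact (2*m+2)::'a) = (2 * of_nat (Suc m)) * (of_nat (2*m+1) * fact (2*m))"
    using f1 by (simp only: mult.assoc)
  have den: "(2::'a)^(Suc m) * fact (Suc m) = (2 * of_nat (Suc m)) * (2^m * fact m)"
    using f2 by (simp add: algebra_simps)
  have c0: "(2 * of_nat (Suc m) :: 'a) \<noteq> 0" using nz1 by (simp only: mult_eq_0_iff zero_neq_numeral) simp
  have "cc (2*m+2) = (fact (2*m+2)::'a) / ((2::'a)^(Suc m) * fact (Suc m))"
    unfolding cc_def a by (simp only: of_nat_fact)
  also have "\<dots> = (of_nat (2*m+1) * fact (2*m)) / (2^m * fact m)"
    unfolding num den by (rule mult_divide_mult_cancel_left[OF c0])
  also have "\<dots> = of_nat (2*m+1) * cc (2*m)"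
    unfolding cc_def a by (simp only: of_nat_fact times_divide_eq_right)
  finally show ?thesis .
qed

lemma kC: "of_nat k * fps_nth (Cycle_fps q u) k = (if 3 \<le> k then hh q u k / 2 else 0)"
proof -
  have "of_nat k \<noteq> (0::'a)" if "3 \<le> k" using that by simp
  then show ?thesis by (simp add: Cycle_nth field_simps)
qed

lemma Dnth: "fps_nth (fps_deriv (Cycle_fps q u)) n = (if 3 \<le> Suc n then hh q u (Suc n) else 0) / 2"
  using kC[of "n+1" q u] by (simp add: fps_deriv_nth)

lemma Hf_deriv: "fps_deriv (Hf q u) = Hf q u * fps_deriv (Cycle_fps q u)"
proof -
  have "fps_nth (Cycle_fps q u) 0 = 0" by (simp add: Cycle_nth)
  then show ?thesis unfolding Hf_def by (simp add: fps_compose_deriv fps_exp_deriv)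
qed

lemma Hf_rec: "2 * of_nat n * fps_nth (Hf q u) n
   = (\<Sum>i<n. fps_nth (Hf q u) i * (if 3 \<le> n - i then hh q u (n - i) else 0))"
proof (cases n)
  case 0 then show ?thesis by simp
next
  case (Suc m)
  have "of_nat (Suc m) * fps_nth (Hf q u) (Suc m) = fps_nth (fps_deriv (Hf q u)) m"
    by (simp add: fps_deriv_nth)
  also have "\<dots> = (\<Sum>i=0..m. fps_nth (Hf q u) i * fps_nth (fps_deriv (Cycle_fps q u)) (m - i))"
    unfolding Hf_deriv fps_mult_nth ..
  also have "\<dots> = (\<Sum>i<Suc m. fps_nth (Hf q u) i * ((if 3 \<le> Suc m - i then hh q u (Suc m - i) else 0) / 2))"
  proof -
    have "{0..m} = {..<Suc m}" by auto
    moreover have "Suc (m - i) = Suc m - i" if "i < Suc m" for i using that by simp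
    ultimately show ?thesis by (simp del: fps_deriv_nth add: Dnth) (intro sum.cong refl, simp add: Suc_diff_le)
  qed
  finally have "2 * (of_nat (Suc m) * fps_nth (Hf q u) (Suc m)) = 2 * (\<Sum>i<Suc m. fps_nth (Hf q u) i * ((if 3 \<le> Suc m - i then hh q u (Suc m - i) else 0) / 2))"
    by simp
  then show ?thesis unfolding Suc by (simp add: sum_distrib_left mult.assoc) (simp add: algebra_simps)
qed

lemma R0: "Acl q u 0 0 = 1"
  by (simp add: Acl_def cc_def Hf_def fps_compose_nth_0)

lemma Acl0: "Acl q u 0 n = fact n * fps_nth (Hf q u) n"
  by (simp add: Acl_def cc_def)

lemma sum_rev: "(\<Sum>i\<le>p. (g::nat \<Rightarrow> 'b::comm_monoid_add) (p - i)) = (\<Sum>i\<le>p. g i)"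
  using sum.nat_diff_reindex[of g "Suc p"] by (simp add: lessThan_Suc_atMost)

lemma R1:
  assumes d: "1 \<le> d"
  shows "Acl q u d n2 = of_nat (d-1) * Bf (Acl q u) (hh q u) 0 d n2"
proof (cases "even d")
  case False
  show ?thesis
  proof (cases "d = 1")
    case True then show ?thesis using False by (simp add: Acl_def)
  next
    case d1: False
    then have "odd (d-2)" using False d by auto
    then have "Acl q u (d-2) m = 0" for m by (simp add: Acl_def)
    then show ?thesis using False by (simp add: Acl_def Bf_closed)
  qed
next
  case True
  then obtain k where k: "d = 2*k" by blast
  have "k \<ge> 1" using k d by auto
  then obtain m where m: "d = 2*m+2" using k by (intro that[of "k-1"]) auto
  let ?P = "Path_fps q u" and ?G = "Hf q u * Path_fps q u ^ m"
  have dd: "d - 2 = 2*m" "d div 2 = Suc m" "(2*m) div 2 = m" "d - 1 = 2*m+1" using m by auto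
  have t: "of_nat (fact n2) / of_nat (fact (n2-j)) * hh q u (j+2+0) * Acl q u (d-2) (n2-j)
     = cc (2*m) * fact n2 * (fps_nth ?P j * fps_nth ?G (n2-j))" for j
  proof -
    have "(fact (n2-j) :: 'a) \<noteq> 0" by simp
    then show ?thesis unfolding dd(1) Acl_def using dd(3) by (simp add: Path_nth field_simps)
  qed
  have "Bf (Acl q u) (hh q u) 0 d n2 = cc (2*m) * fact n2 * (\<Sum>j\<le>n2. fps_nth ?P j * fps_nth ?G (n2-j))"
    unfolding Bf_closed t by (simp add: sum_distrib_left)
  also have "(\<Sum>j\<le>n2. fps_nth ?P j * fps_nth ?G (n2-j)) = fps_nth (?P * ?G) n2"
    by (simp add: fps_mult_nth atLeast0AtMost)
  also have "?P * ?G = Hf q u * Path_fps q u ^ (d div 2)" unfolding dd by (simp add: algebra_simps)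
  finally have B: "Bf (Acl q u) (hh q u) 0 d n2 = cc (2*m) * fact n2 * fps_nth (Hf q u * Path_fps q u ^ (d div 2)) n2" .
  have "Acl q u d n2 = cc (2*m+2) * fact n2 * fps_nth (Hf q u * Path_fps q u ^ (d div 2)) n2"
    using True m by (simp add: Acl_def)
  also have "\<dots> = of_nat (d-1) * Bf (Acl q u) (hh q u) 0 d n2"
    unfolding B cc_step dd(4) by (simp add: algebra_simps)
  finally show ?thesis .
qed

lemma R2:
  assumes n: "1 \<le> n"
  shows "2 * Acl q u 0 n = of_nat ((n-1)*(n-2)) * Bf (Acl q u) (hh q u) 1 2 (n-3)"
proof (cases "n \<le> 2")
  case True
  have "(\<Sum>i<n. fps_nth (Hf q u) i * (if 3 \<le> n - i then hh q u (n - i) else 0)) = 0"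
    using True by (intro sum.neutral) auto
  then have "2 * of_nat n * fps_nth (Hf q u) n = 0" using Hf_rec by metis
  then have "fps_nth (Hf q u) n = 0" using n by simp
  moreover have "(n-1)*(n-2) = 0" using True by auto
  ultimately show ?thesis by (simp add: Acl0)
next
  case False
  then obtain p where p: "n = p + 3" by (metis add.commute le_Suc_ex not_le numeral_3_eq_3 Suc_leI numeral_2_eq_2)
  let ?H = "\<lambda>i. fps_nth (Hf q u) i"
  have "2 * of_nat n * ?H n = (\<Sum>i<n. ?H i * (if 3 \<le> n - i then hh q u (n - i) else 0))"
    by (rule Hf_rec)
  also have "\<dots> = (\<Sum>i\<le>p. ?H i * hh q u (n - i))"
    by (rule sum.mono_neutral_cong_right) (use p in auto)
  also have "\<dots> = (\<Sum>j\<le>p. ?H (p - j) * hh q u (j + 3))"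
    using sum_rev[of "\<lambda>i. ?H i * hh q u (n - i)" p, symmetric] p by (simp add: add.commute)
  finally have Hn: "2 * of_nat n * ?H n = (\<Sum>j\<le>p. ?H (p - j) * hh q u (j + 3))" .
  have t: "of_nat (fact p) / of_nat (fact (p-j)) * hh q u (j+2+1) * Acl q u (2-2) (p-j)
     = fact p * (?H (p - j) * hh q u (j + 3))" for j
  proof -
    have "(fact (p-j) :: 'a) \<noteq> 0" by simp
    then show ?thesis by (simp add: Acl0 field_simps numeral_3_eq_3)
  qed
  have n3: "n - 3 = p" using p by simp
  have "Bf (Acl q u) (hh q u) 1 2 (n-3) = (\<Sum>j\<le>p. of_nat (fact p) / of_nat (fact (p-j)) * hh q u (j+2+1) * Acl q u (2-2) (p-j))"
    by (simp only: Bf_closed n3)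
  also have "\<dots> = (\<Sum>j\<le>p. fact p * (?H (p - j) * hh q u (j + 3)))"
    by (rule sum.cong[OF refl]) (rule t)
  finally have Bv: "Bf (Acl q u) (hh q u) 1 2 (n-3) = fact p * (\<Sum>j\<le>p. ?H (p - j) * hh q u (j + 3))"
    by (simp only: sum_distrib_left)
  have fn: "(fact n :: 'a) = of_nat n * (of_nat ((n-1)*(n-2)) * fact p)"
  proof -
    have "fact n = n * ((n-1)*(n-2) * fact p)" unfolding p by (simp add: fact_Suc algebra_simps numeral_3_eq_3)
    then have "(of_nat (fact n) :: 'a) = of_nat (n * ((n-1)*(n-2) * fact p))" by simp
    then show ?thesis by (simp only: of_nat_fact of_nat_mult)
  qed
  have "2 * Acl q u 0 n = of_nat ((n-1)*(n-2)) * fact p * (2 * of_nat n * ?H n)"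
    unfolding Acl0 fn by (simp add: algebra_simps)
  also have "\<dots> = of_nat ((n-1)*(n-2)) * Bf (Acl q u) (hh q u) 1 2 (n-3)"
    unfolding Hn Bv by (simp add: algebra_simps)
  finally show ?thesis .
qed

lemma recs_Acl: "recs (hh q u) (Acl q u)"
  unfolding recs_def using R0 R1 R2 by blast


lemma prod_count:
  fixes u :: "nat \<Rightarrow> 'a::field_char_0"
  assumes S: "finite S"
  shows "(\<Prod>j\<in>{2..q}. u j ^ card {C\<in>S. card C = j}) = (\<Prod>C\<in>S. hh q u (card C))"
proof -
  have "(\<Prod>C\<in>S. hh q u (card C)) = (\<Prod>C\<in>S. \<Prod>j\<in>{2..q}. if card C = j then u j else 1)"
    by (rule prod.cong[OF refl]) (simp add: hh_def)
  also have "\<dots> = (\<Prod>j\<in>{2..q}. \<Prod>C\<in>S. if card C = j then u j else 1)"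
    by (rule prod.swap)
  also have "\<dots> = (\<Prod>j\<in>{2..q}. u j ^ card {C\<in>S. card C = j})"
  proof (rule prod.cong[OF refl])
    fix j
    have "(\<Prod>C\<in>S. if card C = j then u j else 1) = (\<Prod>C\<in>{C\<in>S. card C = j}. u j)"
      using S by (simp add: prod.If_cases Int_def)
    then show "(\<Prod>C\<in>S. if card C = j then u j else 1) = u j ^ card {C\<in>S. card C = j}" by simp
  qed
  finally show ?thesis by simp
qed

lemma components_eq: "components n E = comps {1..n} E"
  unfolding components_def comps_def component_def ..

lemma graphs12_gr:
  assumes D: "D \<subseteq> {1..n1+n2}" "card D = n1"
  shows "{E\<in>graphs12 n1 n2. {v\<in>{1..n1+n2}. degree E v = 1} = D} = gr {1..n1+n2} D"
proof (rule set_eqI, rule iffI)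
  fix E assume "E \<in> {E\<in>graphs12 n1 n2. {v\<in>{1..n1+n2}. degree E v = 1} = D}"
  then have E: "E \<in> graphs12 n1 n2" and dE: "{v\<in>{1..n1+n2}. degree E v = 1} = D" by auto
  show "E \<in> gr {1..n1+n2} D" unfolding gr_def
  proof (intro CollectI conjI ballI)
    fix e assume "e \<in> E" then show "e \<subseteq> {1..n1+n2}" "card e = 2"
      using E unfolding graphs12_def simple_graph_def by auto
  next
    fix v assume "v \<in> D" then show "degree E v = 1" using dE by auto
  next
    fix v assume v: "v \<in> {1..n1+n2} - D"
    then have "degree E v \<noteq> 1" using dE by auto
    then show "degree E v = 2" using E v unfolding graphs12_def by auto
  qed
next
  fix E assume E: "E \<in> gr {1..n1+n2} D"
  have dE: "{v\<in>{1..n1+n2}. degree E v = 1} = D"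
  proof (rule set_eqI, rule iffI)
    fix v assume v: "v \<in> {v\<in>{1..n1+n2}. degree E v = 1}"
    show "v \<in> D"
    proof (rule ccontr)
      assume "v \<notin> D"
      then have "degree E v = 2" using E v unfolding gr_def by auto
      then show False using v by simp
    qed
  next
    fix v assume v: "v \<in> D"
    then show "v \<in> {v\<in>{1..n1+n2}. degree E v = 1}" using E D unfolding gr_def by auto
  qed
  have "E \<in> graphs12 n1 n2"
    unfolding graphs12_def simple_graph_def
  proof (intro CollectI conjI ballI)
    fix e assume "e \<in> E" then show "e \<subseteq> {1..n1+n2}" "card e = 2" using E unfolding gr_def by auto
  next
    fix v assume "v \<in> {1..n1+n2}" then show "degree E v = 1 \<or> degree E v = 2"
      using E unfolding gr_def by (cases "v \<in> D") auto
  next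
    show "card {v\<in>{1..n1+n2}. degree E v = 1} = n1" using dE D by simp
  qed
  then show "E \<in> {E\<in>graphs12 n1 n2. {v\<in>{1..n1+n2}. degree E v = 1} = D}" using dE by auto
qed

lemma genpoly_Acl:
  fixes u :: "nat \<Rightarrow> 'a::field_char_0"
  shows "genpoly q u n1 n2 = of_nat ((n1+n2) choose n1) * Acl q u n1 n2"
proof -
  let ?V = "{1..n1+n2}"
  let ?Ds = "{D. D \<subseteq> ?V \<and> card D = n1}"
  let ?w = "\<lambda>E. \<Prod>j\<in>{2..q}. u j ^ comp_count (n1 + n2) E j"
  have fS: "finite (graphs12 n1 n2)"
  proof -
    have "graphs12 n1 n2 \<subseteq> Pow (Pow ?V)" unfolding graphs12_def simple_graph_def by auto
    then show ?thesis by (rule finite_subset) simp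
  qed
  have fT: "finite ?Ds" by simp
  have img: "(\<lambda>E. {v\<in>?V. degree E v = 1}) ` graphs12 n1 n2 \<subseteq> ?Ds"
    unfolding graphs12_def by auto
  have rA1: "recs (\<lambda>_. 1) (Acl q (\<lambda>_. 1 :: 'a))"
  proof -
    have "hh q (\<lambda>_. 1 :: 'a) = (\<lambda>_. 1)" unfolding hh_def by auto
    then show ?thesis using recs_Acl[of q "\<lambda>_. 1 :: 'a"] by simp
  qed
  have S0v: "S0 (hh q u) ?V D = Acl q u n1 n2" if D: "D \<in> ?Ds" for D
  proof -
    have "S0 (hh q u) ?V D = Acl q u (card D) (card (?V - D))"
      using comb_main[OF rA1, of ?V] recs_Acl[of q u] D by auto
    moreover have "card (?V - D) = n2"
    proof -
      have "finite D" "D \<subseteq> ?V" using D finite_subset by auto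
      then have "card (?V - D) = card ?V - card D" by (simp add: card_Diff_subset)
      then show ?thesis using D by simp
    qed
    ultimately show ?thesis using D by simp
  qed
  have "genpoly q u n1 n2 = (\<Sum>E\<in>graphs12 n1 n2. ?w E)" unfolding genpoly_def ..
  also have "\<dots> = (\<Sum>D\<in>?Ds. \<Sum>E\<in>{E\<in>graphs12 n1 n2. {v\<in>?V. degree E v = 1} = D}. ?w E)"
    by (rule sum.group[OF fS fT img, symmetric])
  also have "\<dots> = (\<Sum>D\<in>?Ds. S0 (hh q u) ?V D)"
  proof (rule sum.cong[OF refl])
    fix D assume D: "D \<in> ?Ds"
    have "(\<Sum>E\<in>{E\<in>graphs12 n1 n2. {v\<in>?V. degree E v = 1} = D}. ?w E) = (\<Sum>E\<in>gr ?V D. ?w E)"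
      using graphs12_gr[of D n1 n2] D by simp
    also have "\<dots> = S0 (hh q u) ?V D"
      unfolding S0_def wt_def
      by (rule sum.cong[OF refl]) (simp add: comp_count_def components_eq prod_count finite_comps)
    finally show "(\<Sum>E\<in>{E\<in>graphs12 n1 n2. {v\<in>?V. degree E v = 1} = D}. ?w E) = S0 (hh q u) ?V D" .
  qed
  also have "\<dots> = (\<Sum>D\<in>?Ds. Acl q u n1 n2)" by (rule sum.cong[OF refl]) (rule S0v)
  also have "\<dots> = of_nat (card ?Ds) * Acl q u n1 n2" by simp
  also have "card ?Ds = (n1+n2) choose n1" using n_subsets[of ?V n1] by simp
  finally show ?thesis .
qed

theorem lemma1:
  fixes q n1 n2 :: nat and u :: "nat \<Rightarrow> 'a::field_char_0"
  assumes "q \<ge> 2"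
  shows "(odd n1 \<longrightarrow> genpoly q u n1 n2 = 0)
       \<and> (even n1 \<longrightarrow> genpoly q u n1 n2 =
            of_nat (fact (n1 + n2)) / (2 ^ (n1 div 2) * of_nat (fact (n1 div 2)))
            * fps_nth ((fps_exp 1 oo Cycle_fps q u) * Path_fps q u ^ (n1 div 2)) n2)"
proof (intro conjI impI)
  assume "odd n1" then show "genpoly q u n1 n2 = 0" unfolding genpoly_Acl by (simp add: Acl_def)
next
  assume ev: "even n1"
  have bf: "fact n1 * fact n2 * ((n1+n2) choose n1) = fact (n1+n2)"
    using binomial_fact_lemma[of n1 "n1+n2"] by simp
  then have bf': "(of_nat ((n1+n2) choose n1) :: 'a) * of_nat (fact n1) * of_nat (fact n2) = of_nat (fact (n1+n2))"
    by (metis (mono_tags, lifting) mult.commute mult.left_commute of_nat_mult)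
  show "genpoly q u n1 n2 = of_nat (fact (n1 + n2)) / (2 ^ (n1 div 2) * of_nat (fact (n1 div 2)))
            * fps_nth ((fps_exp 1 oo Cycle_fps q u) * Path_fps q u ^ (n1 div 2)) n2"
    unfolding genpoly_Acl Acl_def cc_def Hf_def using ev bf'[symmetric]
    by (simp add: field_simps)
qed


end
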